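(* Let $\mathfrak G_{\mathcal J}=\{a\in\mathfrak G: [a,\mathcal J]\subset\mathcal J\}$. Then the composite map $\frac1\hbar\mathcal J\hookrightarrow\frac1\hbar\mathcal D\to\mathfrak G$ is injective and its image is exactly $\mathfrak G_{\mathcal J}$; i.e. $\mathfrak G_{\mathcal J}=\frac1\hbar\mathcal J$.
   Context: Let $\Bbbk$ be a field of characteristic zero, $V$ a $2n$-dimensional $\Bbbk$-vector space with symplectic form $\omega$. Let $D$ be the universal enveloping algebra of the Heisenberg Lie algebra $V\oplus\Bbbk\hbar$ with $[x,y]=\omega(x,y)\hbar$, $[x,\hbar]=0$ for $x,y\in V$, graded with $V$ in degree 1 and $\hbar$ in degree 2, $D=\bigoplus_{i\ge0}D^i$; let $\mathcal D=\prod_{i\geq0}D^i$ and $\mathcal A=\mathcal D/\hbar\mathcal D$ (a commutative algebra of formal power series). Let $\frac1\hbar\mathcal D$ be the free rank one $\mathcal D$-submodule of $\Bbbk((\hbar))\otimes_{\Bbbk[[\hbar]]}\mathcal D$ generated by $\frac1\hbar$; it is a Lie algebra under the commutator $[a,b]=ab-ba$, and $\mathcal D$ is a Lie ideal in it. Let $\mathfrak G=\frac1\hbar\mathcal D/\frac1\hbar\Bbbk$ (quotient by the central subalgebra $\frac1\hbar D^0$); $\mathfrak G$ acts on $\mathcal D$ by $a\mapsto[a,-]$. Fix a Lagrangian subspace $\mathfrak x\subset V$ and let $\mathcal J\subset\mathcal D$ be the preimage of the ideal $\mathcal A\mathfrak x\subset\mathcal A$ under the projection $\mathcal D\to\mathcal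 A$; $\mathcal J$ is a two-sided ideal. *)

theory Defs
  imports Main
begin

text \<open>V = k^{2n} with a symplectic basis x_1..x_n, y_1..y_n,
  omega(x_i,y_j) = delta_ij, omega(x_i,x_j) = omega(y_i,y_j) = 0.
  By PBW, D has the k-basis of normally ordered monomials X^alpha Y^beta hbar^m;
  the completion D-hat = prod_i D^i is the space of all coefficient functions on
  these monomials (each graded piece is finite dimensional).  Index i < n of
  alpha/beta refers to x_i / y_i; entries at indices >= n are zero.\<close>

type_synonym mono = "(nat \<Rightarrow> nat) \<times> (nat \<Rightarrow> nat) \<times> nat"
type_synonym 'k ser = "mono \<Rightarrow> 'k"

definition supp_ok :: "nat \<Rightarrow> (nat \<Rightarrow> nat) \<Rightarrow> bool" where
  "supp_ok n a \<longleftrightarrow> (\<forall>i\<ge>n. a i = 0)"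

definition Dc :: "nat \<Rightarrow> ('k::field_char_0) ser set" where
  "Dc n = {f. \<forall>a b m. \<not> (supp_ok n a \<and> supp_ok n b) \<longrightarrow> f (a, b, m) = 0}"

text \<open>Normal ordering: y^b x^c = sum_k k! C(b,k) C(c,k) (-hbar)^k x^(c-k) y^(b-k)
  in each pair of variables, since x y - y x = hbar.\<close>
definition wcoeff :: "nat \<Rightarrow> (nat \<Rightarrow> nat) \<Rightarrow> (nat \<Rightarrow> nat) \<Rightarrow> (nat \<Rightarrow> nat) \<Rightarrow> 'k::field_char_0" where
  "wcoeff n b c k = (-1) ^ (\<Sum>i<n. k i) *
     (\<Prod>i<n. of_nat (fact (k i) * (b i choose k i) * (c i choose k i)))"

definition wterms :: "nat \<Rightarrow> (nat \<Rightarrow> nat) \<Rightarrow> (nat \<Rightarrow> nat) \<Rightarrow> nat \<Rightarrow>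
   ((nat \<Rightarrow> nat) \<times> (nat \<Rightarrow> nat) \<times> nat \<times> (nat \<Rightarrow> nat) \<times> (nat \<Rightarrow> nat) \<times> nat \<times> (nat \<Rightarrow> nat)) set" where
  "wterms n A B M = {(a, b, m, c, d, p, k).
      supp_ok n a \<and> supp_ok n b \<and> supp_ok n c \<and> supp_ok n d \<and> supp_ok n k \<and>
      (\<forall>i. k i \<le> b i \<and> k i \<le> c i \<and> A i = a i + c i - k i \<and> B i = b i + d i - k i) \<and>
      M = m + p + (\<Sum>i<n. k i)}"

definition wmult :: "nat \<Rightarrow> ('k::field_char_0) ser \<Rightarrow> 'k ser \<Rightarrow> 'k ser" where
  "wmult n f g = (\<lambda>(A, B, M). \<Sum>(a, b, m, c, d, p, k) \<in> wterms n A B M.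
      wcoeff n b c k * f (a, b, m) * g (c, d, p))"

definition hbar :: "('k::field_char_0) ser" where
  "hbar = (\<lambda>t. if t = (\<lambda>_. 0, \<lambda>_. 0, 1) then 1 else 0)"

definition constc :: "'k \<Rightarrow> ('k::field_char_0) ser" where
  "constc c = (\<lambda>t. if t = (\<lambda>_. 0, \<lambda>_. 0, 0) then c else 0)"

text \<open>V = k^{2n}: coordinates i < n are x-coordinates, n <= i < 2n are y-coordinates.\<close>
definition Vsp :: "nat \<Rightarrow> (nat \<Rightarrow> 'k::field_char_0) set" where
  "Vsp n = {v. \<forall>i\<ge>2*n. v i = 0}"

definition omega :: "nat \<Rightarrow> (nat \<Rightarrow> 'k::field_char_0) \<Rightarrow> (nat \<Rightarrow> 'k) \<Rightarrow> 'k" where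
  "omega n u v = (\<Sum>i<n. u i * v (n + i) - u (n + i) * v i)"

definition lagrangian :: "nat \<Rightarrow> (nat \<Rightarrow> 'k::field_char_0) set \<Rightarrow> bool" where
  "lagrangian n L \<longleftrightarrow> L \<subseteq> Vsp n \<and> L = {v \<in> Vsp n. \<forall>u\<in>L. omega n u v = 0}"

definition unitv :: "nat \<Rightarrow> nat \<Rightarrow> nat" where
  "unitv i = (\<lambda>j. if j = i then 1 else 0)"

definition vemb :: "nat \<Rightarrow> (nat \<Rightarrow> 'k::field_char_0) \<Rightarrow> 'k ser" where
  "vemb n v = (\<lambda>t. \<Sum>i<n. (if t = (unitv i, \<lambda>_. 0, 0) then v i else 0)
                        + (if t = (\<lambda>_. 0, unitv i, 0) then v (n + i) else 0))"

text \<open>J: preimage in D of the ideal of A = D/hbar D generated by the Lagrangian L.\<close>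
definition Jideal :: "nat \<Rightarrow> (nat \<Rightarrow> 'k::field_char_0) set \<Rightarrow> 'k ser set" where
  "Jideal n L = {j \<in> Dc n. \<exists>ls gs h. length gs = length ls \<and> set ls \<subseteq> L \<and>
      set gs \<subseteq> Dc n \<and> h \<in> Dc n \<and>
      j = (\<lambda>t. (\<Sum>i<length ls. wmult n (vemb n (ls ! i)) (gs ! i) t) + wmult n hbar h t)}"

text \<open>The element a/hbar of (1/hbar)D is represented by a.  Its class in
  G = (1/hbar)D / (1/hbar)k is the coset of a modulo constants.\<close>
definition gcls :: "nat \<Rightarrow> ('k::field_char_0) ser \<Rightarrow> 'k ser set" where
  "gcls n a = {(\<lambda>t. a t + constc c t) | c. True}"

definition Gset :: "nat \<Rightarrow> ('k::field_char_0) ser set set" where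
  "Gset n = gcls n ` Dc n"

text \<open>[a/hbar, b] \<in> J for all b \<in> J; [a/hbar,b] is the unique c with hbar c = ab - ba.\<close>
definition normalizes :: "nat \<Rightarrow> ('k::field_char_0) ser set \<Rightarrow> 'k ser \<Rightarrow> bool" where
  "normalizes n J a \<longleftrightarrow> (\<forall>b\<in>J. \<exists>c\<in>J. wmult n hbar c = (\<lambda>t. wmult n a b t - wmult n b a t))"

definition GJ :: "nat \<Rightarrow> (nat \<Rightarrow> 'k::field_char_0) set \<Rightarrow> 'k ser set set" where
  "GJ n L = {X \<in> Gset n. \<forall>a\<in>X. normalizes n (Jideal n L) a}"

end

theory Submission
  imports Defs "HOL-Library.Function_Algebras" "HOL-Library.FuncSet" "HOL.Vector_Spaces"
begin


definition svec :: "'a::field \<Rightarrow> (nat \<Rightarrow> 'a) \<Rightarrow> (nat \<Rightarrow> 'a)" where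
  "svec c v = (\<lambda>i. c * v i)"

lemma svec_vs: "Vector_Spaces.vector_space (svec :: 'a::field \<Rightarrow> _)"
  by unfold_locales (auto simp: svec_def fun_eq_iff algebra_simps)

lemma proj_exists:
  fixes L :: "(nat \<Rightarrow> 'a::field) set"
  assumes z: "(\<lambda>_. 0) \<in> L" and ad: "\<And>u v. u \<in> L \<Longrightarrow> v \<in> L \<Longrightarrow> (\<lambda>i. u i + v i) \<in> L"
    and sc: "\<And>c u. u \<in> L \<Longrightarrow> (\<lambda>i. c * u i) \<in> L"
  shows "\<exists>p. (\<forall>u v. p (\<lambda>i. u i + v i) = (\<lambda>i. p u i + p v i)) \<and>
             (\<forall>c u. p (\<lambda>i. c * u i) = (\<lambda>i. c * p u i)) \<and> (\<forall>u. p u \<in> L) \<and> (\<forall>l\<in>L. p l = l)"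
proof -
  interpret vs: Vector_Spaces.vector_space "svec :: 'a \<Rightarrow> _" by (rule svec_vs)
  interpret vp: Vector_Spaces.vector_space_pair "svec :: 'a \<Rightarrow> _" "svec :: 'a \<Rightarrow> _" by unfold_locales
  have sub: "vs.subspace L" unfolding vs.subspace_def
    using z ad sc by (auto simp: svec_def plus_fun_def zero_fun_def)
  obtain B where B: "B \<subseteq> L" "vs.independent B" "L \<subseteq> vs.span B"
    using vs.maximal_independent_subset by blast
  have spanB: "vs.span B = L" using B sub vs.span_minimal by blast
  obtain g where g: "Vector_Spaces.linear svec svec g" "\<forall>x\<in>B. g x = id x" "range g = vs.span (id ` B)"
    using vp.linear_independent_extend_subspace[OF B(2), of id] by blast
  interpret lg: Vector_Spaces.linear svec svec g by (rule g(1))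
  have lid: "Vector_Spaces.linear svec svec (id :: (nat \<Rightarrow> 'a) \<Rightarrow> _)"
    by unfold_locales (auto simp: svec_def)
  show ?thesis
  proof (intro exI[of _ g] conjI allI ballI)
    fix u v :: "nat \<Rightarrow> 'a"
    show "g (\<lambda>i. u i + v i) = (\<lambda>i. g u i + g v i)"
      using lg.add[of u v] by (simp add: plus_fun_def)
  next
    fix c u show "g (\<lambda>i. c * u i) = (\<lambda>i. c * g u i)"
      using lg.scale[of c u] by (simp add: svec_def)
  next
    fix u show "g u \<in> L" using g(3) spanB by auto
  next
    fix l assume "l \<in> L"
    then show "g l = l" using vp.linear_eq_on[OF g(1) lid, of l B] g(2) spanB by auto
  qed
qed


type_synonym mi = "(nat \<Rightarrow> nat) \<times> (nat \<Rightarrow> nat)"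

definition fs :: "mi \<Rightarrow> bool" where
  "fs u \<longleftrightarrow> finite {i. fst u i \<noteq> 0} \<and> finite {i. snd u i \<noteq> 0}"

definition madd :: "mi \<Rightarrow> mi \<Rightarrow> mi" where
  "madd u v = (\<lambda>i. fst u i + fst v i, \<lambda>i. snd u i + snd v i)"

definition pairs :: "mi \<Rightarrow> (mi \<times> mi) set" where
  "pairs u = {(v, w). madd v w = u}"

lemma madd_assoc: "madd (madd x y) z = madd x (madd y z)"
  by (simp add: madd_def add.assoc)
lemma madd_comm: "madd x y = madd y x"
  by (simp add: madd_def add.commute)
lemma madd_0[simp]: "madd (\<lambda>_. 0, \<lambda>_. 0) x = x" "madd x (\<lambda>_. 0, \<lambda>_. 0) = x"
  by (auto simp: madd_def)
lemma madd_eq_0: "madd x y = (\<lambda>_. 0, \<lambda>_. 0) \<longleftrightarrow> x = (\<lambda>_. 0, \<lambda>_. 0) \<and> y = (\<lambda>_. 0, \<lambda>_. 0)"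
  by (cases x; cases y) (auto simp: madd_def fun_eq_iff)

lemma fs_madd[simp]: "fs (madd u v) \<longleftrightarrow> fs u \<and> fs v"
proof -
  have e1: "{i. fst u i + fst v i \<noteq> 0} = {i. fst u i \<noteq> 0} \<union> {i. fst v i \<noteq> 0}" by auto
  have e2: "{i. snd u i + snd v i \<noteq> 0} = {i. snd u i \<noteq> 0} \<union> {i. snd v i \<noteq> 0}" by auto
  show ?thesis by (simp add: fs_def madd_def e1 e2) blast
qed

lemma finite_bounded_funs:
  assumes "finite {i. A i \<noteq> (0::nat)}"
  shows "finite {a. \<forall>i. a i \<le> A i}"
proof -
  let ?S = "{i. A i \<noteq> 0}"
  have "inj_on (\<lambda>a. restrict a ?S) {a. \<forall>i. a i \<le> A i}"
  proof (rule inj_onI)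
    fix a b assume a: "a \<in> {a. \<forall>i. a i \<le> A i}" and b: "b \<in> {a. \<forall>i. a i \<le> A i}"
      and e: "restrict a ?S = restrict b ?S"
    show "a = b"
    proof
      fix i show "a i = b i"
      proof (cases "i \<in> ?S")
        case True
        have "restrict a ?S i = restrict b ?S i" using e by simp
        then show ?thesis using True by simp
      next
        case False
        have "a i \<le> A i" "b i \<le> A i" using a b by auto
        then show ?thesis using False by simp
      qed
    qed
  qed
  moreover have "(\<lambda>a. restrict a ?S) ` {a. \<forall>i. a i \<le> A i} \<subseteq> PiE ?S (\<lambda>i. {..A i})"
    by (auto simp: PiE_iff extensional_def split: if_splits)
  moreover have "finite (PiE ?S (\<lambda>i. {..A i}))" using assms by (intro finite_PiE) auto
  ultimately show ?thesis by (meson finite_imageD finite_subset)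
qed

lemma finite_pairs: assumes "fs u" shows "finite (pairs u)"
proof -
  let ?B1 = "{a. \<forall>i. a i \<le> fst u i}" and ?B2 = "{a. \<forall>i. a i \<le> snd u i}"
  have f: "finite ((?B1 \<times> ?B2) \<times> (?B1 \<times> ?B2))"
  proof -
    have "finite ?B1" by (rule finite_bounded_funs) (use assms in \<open>simp add: fs_def\<close>)
    moreover have "finite ?B2" by (rule finite_bounded_funs) (use assms in \<open>simp add: fs_def\<close>)
    ultimately show ?thesis by blast
  qed
  have "pairs u \<subseteq> (?B1 \<times> ?B2) \<times> (?B1 \<times> ?B2)"
  proof (rule subsetI)
    fix p assume "p \<in> pairs u"
    then obtain v w where vw: "p = (v, w)" "madd v w = u" by (auto simp: pairs_def)
    then have "\<forall>i. fst v i \<le> fst u i" "\<forall>i. snd v i \<le> snd u i"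
      "\<forall>i. fst w i \<le> fst u i" "\<forall>i. snd w i \<le> snd u i" by (auto simp: madd_def)
    then show "p \<in> (?B1 \<times> ?B2) \<times> (?B1 \<times> ?B2)" using vw(1) by (cases v, cases w) simp
  qed
  then show ?thesis using f by (rule finite_subset)
qed

lemma pairs_fs: "fs u \<Longrightarrow> (v, w) \<in> pairs u \<Longrightarrow> fs v \<and> fs w"
  by (auto simp: pairs_def)

lemma finite_pairs_fst: "fs u \<Longrightarrow> p \<in> pairs u \<Longrightarrow> finite (pairs (fst p))"
  by (metis finite_pairs pairs_fs prod.collapse)
lemma finite_pairs_snd: "fs u \<Longrightarrow> p \<in> pairs u \<Longrightarrow> finite (pairs (snd p))"
  by (metis finite_pairs pairs_fs prod.collapse)

definition trip :: "mi \<Rightarrow> (mi \<times> mi \<times> mi) set" where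
  "trip u = {(x, y, z). madd (madd x y) z = u}"

lemma sum_pairs_left:
  assumes "fs u"
  shows "(\<Sum>(v, w)\<in>pairs u. \<Sum>(x, y)\<in>pairs v. F x y w) = (\<Sum>(x, y, z)\<in>trip u. F x y z)"
proof -
  have "(\<Sum>(v, w)\<in>pairs u. \<Sum>(x, y)\<in>pairs v. F x y w) =
        (\<Sum>p\<in>pairs u. \<Sum>q\<in>pairs (fst p). F (fst q) (snd q) (snd p))"
    by (simp add: case_prod_beta)
  also have "\<dots> = (\<Sum>(p, q)\<in>Sigma (pairs u) (\<lambda>p. pairs (fst p)). F (fst q) (snd q) (snd p))"
    using assms by (intro sum.Sigma finite_pairs ballI finite_pairs_fst)
  also have "\<dots> = (\<Sum>(x, y, z)\<in>trip u. F x y z)"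
    by (rule sum.reindex_bij_witness[where i="\<lambda>(x,y,z). ((madd x y, z), (x, y))"
          and j="\<lambda>(p,q). (fst q, snd q, snd p)"]) (auto simp: pairs_def trip_def)
  finally show ?thesis .
qed

lemma sum_pairs_right:
  assumes "fs u"
  shows "(\<Sum>(x, v)\<in>pairs u. \<Sum>(y, z)\<in>pairs v. F x y z) = (\<Sum>(x, y, z)\<in>trip u. F x y z)"
proof -
  have "(\<Sum>(x, v)\<in>pairs u. \<Sum>(y, z)\<in>pairs v. F x y z) =
        (\<Sum>p\<in>pairs u. \<Sum>q\<in>pairs (snd p). F (fst p) (fst q) (snd q))"
    by (simp add: case_prod_beta)
  also have "\<dots> = (\<Sum>(p, q)\<in>Sigma (pairs u) (\<lambda>p. pairs (snd p)). F (fst p) (fst q) (snd q))"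
    using assms by (intro sum.Sigma finite_pairs ballI finite_pairs_snd)
  also have "\<dots> = (\<Sum>(x, y, z)\<in>trip u. F x y z)"
    by (rule sum.reindex_bij_witness[where i="\<lambda>(x,y,z). ((x, madd y z), (y, z))"
          and j="\<lambda>(p,q). (fst p, fst q, snd q)"]) (auto simp: pairs_def trip_def madd_assoc)
  finally show ?thesis .
qed

lemma sum_pairs_swap: "(\<Sum>(v, w)\<in>pairs u. F v w) = (\<Sum>(v, w)\<in>pairs u. F w v)"
  by (rule sum.reindex_bij_witness[where i="\<lambda>(v,w). (w,v)" and j="\<lambda>(v,w). (w,v)"])
     (auto simp: pairs_def madd_comm)

lemma sum_pairs_unit:
  fixes c :: "'a::semiring_0"
  assumes "fs u"
  shows "(\<Sum>(v, w)\<in>pairs u. (if v = (\<lambda>_. 0, \<lambda>_. 0) then c else 0) * F w) = c * F u"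
proof -
  have "(\<Sum>(v, w)\<in>pairs u. (if v = (\<lambda>_. 0, \<lambda>_. 0) then c else 0) * F w) =
     (\<Sum>p\<in>pairs u. (if p = ((\<lambda>_. 0, \<lambda>_. 0), u) then c * F u else 0))"
  proof (rule sum.cong[OF refl])
    fix p assume "p \<in> pairs u"
    then obtain v w where vw: "p = (v, w)" "madd v w = u" by (auto simp: pairs_def)
    show "(case p of (v, w) \<Rightarrow> (if v = (\<lambda>_. 0, \<lambda>_. 0) then c else 0) * F w) =
      (if p = ((\<lambda>_. 0, \<lambda>_. 0), u) then c * F u else 0)"
      using vw by (cases "v = (\<lambda>_. 0, \<lambda>_. 0)") auto
  qed
  also have "\<dots> = c * F u"
    using assms by (simp add: finite_pairs) (simp add: pairs_def)
  finally show ?thesis .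
qed

typedef (overloaded) ('k::zero) ps = "{f :: mi \<Rightarrow> 'k. \<forall>u. \<not> fs u \<longrightarrow> f u = 0}"
  morphisms cf Abs_ps by (rule exI[of _ "\<lambda>_. 0"]) auto

setup_lifting type_definition_ps

lemma cf_nfs: "\<not> fs u \<Longrightarrow> cf f u = 0"
  using cf[of f] by (cases u) auto

lemma ps_eqI: "(\<And>u. fs u \<Longrightarrow> cf f u = cf g u) \<Longrightarrow> f = g"
  by (metis cf_inject cf_nfs ext)

instantiation ps :: (comm_ring_1) comm_ring_1
begin
lift_definition zero_ps :: "'a ps" is "\<lambda>_. 0" by simp
lift_definition one_ps :: "'a ps" is "\<lambda>u. if u = (\<lambda>_. 0, \<lambda>_. 0) then 1 else 0"
  by (auto simp: fs_def)
lift_definition plus_ps :: "'a ps \<Rightarrow> 'a ps \<Rightarrow> 'a ps" is "\<lambda>f g u. f u + g u" by simp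
lift_definition minus_ps :: "'a ps \<Rightarrow> 'a ps \<Rightarrow> 'a ps" is "\<lambda>f g u. f u - g u" by simp
lift_definition uminus_ps :: "'a ps \<Rightarrow> 'a ps" is "\<lambda>f u. - f u" by simp
lift_definition times_ps :: "'a ps \<Rightarrow> 'a ps \<Rightarrow> 'a ps" is
  "\<lambda>f g u. if fs u then (\<Sum>(v, w)\<in>pairs u. f v * g w) else 0" by simp
instance
proof
  fix a b c :: "'a ps"
  show "a + b + c = a + (b + c)" by (rule ps_eqI) (simp add: plus_ps.rep_eq add.assoc)
  show "a + b = b + a" by (rule ps_eqI) (simp add: plus_ps.rep_eq add.commute)
  show "0 + a = a" by (rule ps_eqI) (simp add: plus_ps.rep_eq zero_ps.rep_eq)
  show "- a + a = 0" by (rule ps_eqI) (simp add: plus_ps.rep_eq zero_ps.rep_eq uminus_ps.rep_eq)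
  show "a - b = a + - b" by (rule ps_eqI) (simp add: plus_ps.rep_eq minus_ps.rep_eq uminus_ps.rep_eq)
  show "(a + b) * c = a * c + b * c"
  proof (rule ps_eqI)
    fix u assume "fs u"
    then show "cf ((a + b) * c) u = cf (a * c + b * c) u"
      by (simp add: plus_ps.rep_eq times_ps.rep_eq distrib_right sum.distrib case_prod_beta)
  qed
  show "a * b = b * a"
  proof (rule ps_eqI)
    fix u assume "fs u"
    then show "cf (a * b) u = cf (b * a) u"
      using sum_pairs_swap[of "\<lambda>v w. cf a v * cf b w" u]
      by (simp add: times_ps.rep_eq mult.commute)
  qed
  show "1 * a = a"
  proof (rule ps_eqI)
    fix u assume "fs u"
    then show "cf (1 * a) u = cf a u"
      using sum_pairs_unit[of u 1 "cf a"]
      by (simp add: times_ps.rep_eq one_ps.rep_eq)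
  qed
  show "(0::'a ps) \<noteq> 1"
  proof
    assume "(0::'a ps) = 1"
    then have "cf (0::'a ps) (\<lambda>_. 0, \<lambda>_. 0) = cf (1::'a ps) (\<lambda>_. 0, \<lambda>_. 0)" by simp
    then show False by (simp add: zero_ps.rep_eq one_ps.rep_eq)
  qed
  show "a * b * c = a * (b * c)"
  proof (rule ps_eqI)
    fix u assume u: "fs u"
    have "cf (a * b * c) u = (\<Sum>(v, w)\<in>pairs u. (\<Sum>(x, y)\<in>pairs v. cf a x * cf b y) * cf c w)"
      using u by (simp add: times_ps.rep_eq) (rule sum.cong, auto dest: pairs_fs)
    also have "\<dots> = (\<Sum>(v, w)\<in>pairs u. \<Sum>(x, y)\<in>pairs v. cf a x * cf b y * cf c w)"
      by (simp add: sum_distrib_right case_prod_beta)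
    also have "\<dots> = (\<Sum>(x, y, z)\<in>trip u. cf a x * cf b y * cf c z)"
      by (rule sum_pairs_left[OF u])
    also have "\<dots> = (\<Sum>(x, v)\<in>pairs u. \<Sum>(y, z)\<in>pairs v. cf a x * cf b y * cf c z)"
      by (rule sum_pairs_right[OF u, symmetric])
    also have "\<dots> = (\<Sum>(x, v)\<in>pairs u. cf a x * (\<Sum>(y, z)\<in>pairs v. cf b y * cf c z))"
      by (simp add: sum_distrib_left case_prod_beta mult.assoc)
    also have "\<dots> = cf (a * (b * c)) u"
      using u by (simp add: times_ps.rep_eq) (rule sum.cong, auto dest: pairs_fs)
    finally show "cf (a * b * c) u = cf (a * (b * c)) u" .
  qed
qed
end


definition coord :: "nat \<times> bool \<Rightarrow> mi \<Rightarrow> nat" where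
  "coord k u = (if snd k then snd u (fst k) else fst u (fst k))"
definition eu :: "nat \<times> bool \<Rightarrow> mi" where
  "eu k = (if snd k then (\<lambda>_. 0, unitv (fst k)) else (unitv (fst k), \<lambda>_. 0))"
definition mdec :: "nat \<times> bool \<Rightarrow> mi \<Rightarrow> mi" where
  "mdec k u = (if snd k then (fst u, \<lambda>j. snd u j - unitv (fst k) j)
               else (\<lambda>j. fst u j - unitv (fst k) j, snd u))"

abbreviation mz :: mi where "mz \<equiv> (\<lambda>_. 0, \<lambda>_. 0)"

lemma fs_eu[simp]: "fs (eu k)"
proof -
  have "finite {j. unitv (fst k) j \<noteq> 0}" by (rule finite_subset[of _ "{fst k}"]) (auto simp: unitv_def)
  then show ?thesis by (auto simp: fs_def eu_def)
qed

lemma fs_mz[simp]: "fs mz" by (simp add: fs_def)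

lemma coord_madd[simp]: "coord k (madd u v) = coord k u + coord k v"
  by (simp add: coord_def madd_def)
lemma coord_eu: "coord k (eu k') = (if k = k' then 1 else 0)"
  by (cases k; cases k') (auto simp: coord_def eu_def unitv_def)
lemma coord_mz[simp]: "coord k mz = 0" by (simp add: coord_def)

lemma madd_mdec: "coord k u \<ge> 1 \<Longrightarrow> madd (mdec k u) (eu k) = u"
  by (cases u) (auto simp: madd_def mdec_def eu_def coord_def unitv_def fun_eq_iff)
lemma mdec_madd[simp]: "mdec k (madd u (eu k)) = u"
  by (cases u) (auto simp: madd_def mdec_def eu_def coord_def unitv_def fun_eq_iff)
lemma madd_right_comm: "madd (madd x w) e = madd (madd x e) w"
  by (simp add: madd_def add_ac)
lemma madd_cancel: "madd e w = madd e w' \<Longrightarrow> w = w'"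
  by (cases w; cases w') (auto simp: madd_def fun_eq_iff)
lemma madd_cancel2: "madd w e = madd w' e \<Longrightarrow> w = w'"
  by (cases w; cases w') (auto simp: madd_def fun_eq_iff)
lemma fs_mdec: "fs u \<Longrightarrow> coord k u \<ge> 1 \<Longrightarrow> fs (mdec k u)"
  by (metis fs_madd madd_mdec)

lemma sum_pairs_single:
  fixes c :: "'a::semiring_0"
  assumes u: "fs u" and w0: "madd e w0 = u"
  shows "(\<Sum>(v, w)\<in>pairs u. (if v = e then c else 0) * F w) = c * F w0"
proof -
  have "(\<Sum>(v, w)\<in>pairs u. (if v = e then c else 0) * F w) =
     (\<Sum>p\<in>pairs u. (if p = (e, w0) then c * F w0 else 0))"
  proof (rule sum.cong[OF refl])
    fix p assume "p \<in> pairs u"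
    then obtain v w where vw: "p = (v, w)" "madd v w = u" by (auto simp: pairs_def)
    show "(case p of (v, w) \<Rightarrow> (if v = e then c else 0) * F w) =
      (if p = (e, w0) then c * F w0 else 0)"
      using vw w0 madd_cancel[of e w w0] by (cases "v = e") auto
  qed
  also have "\<dots> = c * F w0"
    using u w0 by (simp add: finite_pairs) (simp add: pairs_def)
  finally show ?thesis .
qed

lemma sum_pairs_none:
  fixes c :: "'a::semiring_0"
  assumes "\<And>w. madd e w \<noteq> u"
  shows "(\<Sum>(v, w)\<in>pairs u. (if v = e then c else 0) * F w) = 0"
  using assms by (intro sum.neutral) (auto simp: pairs_def)


lift_definition Xm :: "nat \<times> bool \<Rightarrow> 'a::comm_ring_1 ps" is
  "\<lambda>k u. if u = eu k then 1 else 0" by auto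

lift_definition kc :: "'a \<Rightarrow> 'a::comm_ring_1 ps" is
  "\<lambda>c u. if u = mz then c else 0" by auto

lift_definition dd :: "nat \<times> bool \<Rightarrow> 'a::comm_ring_1 ps \<Rightarrow> 'a ps" is
  "\<lambda>k P u. of_nat (coord k u + 1) * P (madd u (eu k))" by auto

lemma cf_plus: "cf (P + Q) u = cf P u + cf Q u" by (simp add: plus_ps.rep_eq)
lemma cf_minus: "cf (P - Q) u = cf P u - cf Q u" by (simp add: minus_ps.rep_eq)
lemma cf_uminus: "cf (- P) u = - cf P u" by (simp add: uminus_ps.rep_eq)
lemma cf_zero: "cf 0 u = 0" by (simp add: zero_ps.rep_eq)
lemma cf_one: "cf 1 u = (if u = mz then 1 else 0)" by (simp add: one_ps.rep_eq)
lemma cf_times: "fs u \<Longrightarrow> cf (P * Q) u = (\<Sum>(v, w)\<in>pairs u. cf P v * cf Q w)"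
  by (simp add: times_ps.rep_eq)
lemma cf_sum: "cf (\<Sum>i\<in>A. f i) u = (\<Sum>i\<in>A. cf (f i) u)"
  by (induction A rule: infinite_finite_induct) (auto simp: cf_plus cf_zero)

lemmas cf_simps = cf_plus cf_minus cf_uminus cf_zero cf_sum

lemma cf_kc_mult: "cf (kc c * P) u = c * cf P u"
proof (cases "fs u")
  case True
  then show ?thesis using sum_pairs_unit[OF True, of c "cf P"]
    by (simp add: cf_times kc.rep_eq)
next
  case False then show ?thesis by (simp add: cf_nfs)
qed

lemma cf_Xm_mult: "cf (Xm k * P) u = (if coord k u \<ge> 1 then cf P (mdec k u) else 0)"
proof (cases "fs u")
  case True
  show ?thesis
  proof (cases "coord k u \<ge> 1")
    case c: True
    have m: "madd (eu k) (mdec k u) = u" using madd_mdec[OF c] by (simp add: madd_comm)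
    show ?thesis using sum_pairs_single[OF True m, of 1 "cf P"] c True
      by (simp add: cf_times Xm.rep_eq)
  next
    case c: False
    have "\<And>w. madd (eu k) w \<noteq> u"
    proof
      fix w assume "madd (eu k) w = u"
      then have "coord k u = 1 + coord k w" by (auto simp: coord_eu)
      then show False using c by simp
    qed
    then show ?thesis using sum_pairs_none[of "eu k" u 1 "cf P"] c True
      by (simp add: cf_times Xm.rep_eq)
  qed
next
  case False
  have "\<not> fs (mdec k u)" if "coord k u \<ge> 1"
    using False fs_madd[of "mdec k u" "eu k"] madd_mdec[OF that] by simp
  then show ?thesis using False by (simp add: cf_nfs)
qed

lemma kc_add: "kc (a + b) = kc a + kc b" by (rule ps_eqI) (simp add: kc.rep_eq cf_plus)
lemma kc_mult: "kc (a * b) = kc a * kc b" by (rule ps_eqI) (simp add: kc.rep_eq cf_kc_mult)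
lemma kc_0[simp]: "kc 0 = 0" by (rule ps_eqI) (simp add: kc.rep_eq cf_zero)
lemma kc_1[simp]: "kc 1 = 1" by (rule ps_eqI) (simp add: kc.rep_eq cf_one)
lemma kc_uminus: "kc (- a) = - kc a" by (rule ps_eqI) (simp add: kc.rep_eq cf_uminus)
lemma kc_diff: "kc (a - b) = kc a - kc b" by (rule ps_eqI) (simp add: kc.rep_eq cf_minus)
lemma kc_sum: "kc (\<Sum>i\<in>A. f i) = (\<Sum>i\<in>A. kc (f i))"
  by (induction A rule: infinite_finite_induct) (auto simp: kc_add)

lemma dd_add: "dd k (P + Q) = dd k P + dd k Q"
  by (rule ps_eqI) (simp add: dd.rep_eq cf_plus algebra_simps)
lemma dd_diff: "dd k (P - Q) = dd k P - dd k Q"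
  by (rule ps_eqI) (simp add: dd.rep_eq cf_minus algebra_simps)
lemma dd_uminus: "dd k (- P) = - dd k P"
  by (rule ps_eqI) (simp add: dd.rep_eq cf_uminus)
lemma dd_0[simp]: "dd k 0 = 0"
  by (rule ps_eqI) (simp add: dd.rep_eq cf_zero)
lemma dd_sum: "dd k (\<Sum>i\<in>A. f i) = (\<Sum>i\<in>A. dd k (f i))"
  by (induction A rule: infinite_finite_induct) (auto simp: dd_add)
lemma madd_eu_nz: "madd u (eu k) \<noteq> mz"
proof
  assume "madd u (eu k) = mz"
  then have "coord k (madd u (eu k)) = coord k mz" by simp
  then show False by (simp add: coord_eu)
qed

lemma dd_kc[simp]: "dd k (kc c) = 0"
  by (rule ps_eqI) (simp add: dd.rep_eq kc.rep_eq cf_zero madd_eu_nz)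
lemma dd_Xm: "dd k (Xm k') = kc (if k = k' then 1 else 0)"
proof (rule ps_eqI)
  fix u :: mi assume "fs u"
  have "madd u (eu k) = eu k' \<longleftrightarrow> u = mz \<and> k = k'"
  proof
    assume e: "madd u (eu k) = eu k'"
    have "\<forall>j. coord j (madd u (eu k)) = coord j (eu k')" using e by simp
    then have cj: "\<forall>j. coord j u + coord j (eu k) = coord j (eu k')" by simp
    from cj[rule_format, of k] have "k = k'" by (simp add: coord_eu split: if_splits)
    with cj have c0: "\<forall>j. coord j u = 0" by (simp add: coord_eu)
    have "fst u = (\<lambda>_. 0)"
    proof
      fix i show "fst u i = 0" using c0[rule_format, of "(i, False)"] by (simp add: coord_def)
    qed
    moreover have "snd u = (\<lambda>_. 0)"
    proof
      fix i show "snd u i = 0" using c0[rule_format, of "(i, True)"] by (simp add: coord_def)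
    qed
    ultimately have "u = mz" by (cases u) simp
    with \<open>k = k'\<close> show "u = mz \<and> k = k'" by simp
  qed (simp add: madd_comm)
  then show "cf (dd k (Xm k')) u = cf (kc (if k = k' then 1 else 0)) u"
    by (auto simp: dd.rep_eq Xm.rep_eq kc.rep_eq)
qed

lemma sum_pairs_shift:
  fixes F :: "mi \<Rightarrow> mi \<Rightarrow> 'a::comm_ring_1"
  assumes u: "fs u"
  shows "(\<Sum>(v, w)\<in>pairs (madd u (eu k)). of_nat (coord k v) * F v w) =
         (\<Sum>(v, w)\<in>pairs u. of_nat (coord k v + 1) * F (madd v (eu k)) w)"
proof -
  let ?S = "{p \<in> pairs (madd u (eu k)). coord k (fst p) \<ge> 1}"
  have fin: "finite (pairs (madd u (eu k)))" using u by (simp add: finite_pairs)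
  have "(\<Sum>(v, w)\<in>pairs (madd u (eu k)). of_nat (coord k v) * F v w) =
        (\<Sum>(v, w)\<in>?S. of_nat (coord k v) * F v w)"
  proof (rule sum.mono_neutral_right[OF fin])
    show "?S \<subseteq> pairs (madd u (eu k))" by auto
    show "\<forall>i\<in>pairs (madd u (eu k)) - ?S. (case i of (v, w) \<Rightarrow> of_nat (coord k v) * F v w) = 0"
    proof
      fix p assume "p \<in> pairs (madd u (eu k)) - ?S"
      then have "\<not> coord k (fst p) \<ge> 1" by blast
      then have "coord k (fst p) = 0" by simp
      then show "(case p of (v, w) \<Rightarrow> of_nat (coord k v) * F v w) = 0" by (cases p) simp
    qed
  qed
  also have "\<dots> = (\<Sum>(v, w)\<in>pairs u. of_nat (coord k v + 1) * F (madd v (eu k)) w)"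
  proof (rule sum.reindex_bij_witness[where i="\<lambda>(v, w). (madd v (eu k), w)"
                                      and j="\<lambda>(v, w). (mdec k v, w)"])
    fix p assume "p \<in> ?S"
    then show "(case (case p of (v, w) \<Rightarrow> (mdec k v, w)) of (v, w) \<Rightarrow> (madd v (eu k), w)) = p"
      by (cases p) (simp add: madd_mdec)
  next
    fix p assume p: "p \<in> ?S"
    then obtain v w where pe: "p = (v, w)" and vw: "madd v w = madd u (eu k)" "coord k v \<ge> 1"
      by (cases p) (auto simp: pairs_def)
    have "madd (madd (mdec k v) w) (eu k) = madd u (eu k)"
      using vw madd_mdec[OF vw(2)] madd_right_comm[of "mdec k v" w "eu k"] by simp
    then have "madd (mdec k v) w = u" by (rule madd_cancel2)
    then show "(case p of (v, w) \<Rightarrow> (mdec k v, w)) \<in> pairs u" by (simp add: pe pairs_def)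
  next
    fix p assume "p \<in> pairs u"
    then obtain v w where pe: "p = (v, w)" and vw: "madd v w = u" by (cases p) (auto simp: pairs_def)
    have "madd (madd v (eu k)) w = madd u (eu k)" using vw by (simp add: madd_right_comm)
    then show "(case p of (v, w) \<Rightarrow> (madd v (eu k), w)) \<in> ?S"
      by (simp add: pe pairs_def coord_eu)
  next
    fix p assume "p \<in> pairs u"
    then show "(case (case p of (v, w) \<Rightarrow> (madd v (eu k), w)) of (v, w) \<Rightarrow> (mdec k v, w)) = p"
      by (cases p) simp
  next
    fix p assume "p \<in> ?S"
    then obtain v w where pe: "p = (v, w)" and vw: "coord k v \<ge> 1"
      by (cases p) auto
    show "(case (case p of (v, w) \<Rightarrow> (mdec k v, w)) of
           (v, w) \<Rightarrow> of_nat (coord k v + 1) * F (madd v (eu k)) w) =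
         (case p of (v, w) \<Rightarrow> of_nat (coord k v) * F v w)"
    proof -
      have "coord k v = coord k (madd (mdec k v) (eu k))" using madd_mdec[OF vw] by simp
      then have "coord k v = coord k (mdec k v) + 1" by (simp add: coord_eu)
      then show ?thesis using madd_mdec[OF vw] by (simp add: pe)
    qed
  qed
  finally show ?thesis .
qed

lemma dd_mult: "dd k (P * Q) = dd k P * Q + P * dd k Q"
proof (rule ps_eqI)
  fix u :: mi assume u: "fs u"
  let ?u' = "madd u (eu k)"
  have u': "fs ?u'" using u by simp
  have "cf (dd k (P * Q)) u = of_nat (coord k u + 1) * (\<Sum>(v, w)\<in>pairs ?u'. cf P v * cf Q w)"
    using u' by (simp add: dd.rep_eq cf_times)
  also have "\<dots> = (\<Sum>(v, w)\<in>pairs ?u'. of_nat (coord k v) * (cf P v * cf Q w)) +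
                  (\<Sum>(v, w)\<in>pairs ?u'. of_nat (coord k w) * (cf P v * cf Q w))"
  proof -
    have h: "\<And>v w. (v, w) \<in> pairs ?u' \<Longrightarrow> coord k u + 1 = coord k v + coord k w"
    proof -
      fix v w assume "(v, w) \<in> pairs ?u'"
      then have "coord k (madd v w) = coord k ?u'" by (simp add: pairs_def)
      then show "coord k u + 1 = coord k v + coord k w" by (simp add: coord_eu)
    qed
    have "of_nat (coord k u + 1) * (\<Sum>(v, w)\<in>pairs ?u'. cf P v * cf Q w) =
       (\<Sum>(v, w)\<in>pairs ?u'. (of_nat (coord k v) + of_nat (coord k w)) * (cf P v * cf Q w))"
      unfolding sum_distrib_left
    proof (intro sum.cong refl)
      fix p assume p: "p \<in> pairs ?u'"
      obtain v w where pe: "p = (v, w)" by (cases p)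
      have "(of_nat (coord k u + 1) :: 'a) = of_nat (coord k v) + of_nat (coord k w)"
        using h[of v w] p pe by (metis of_nat_add)
      then show "of_nat (coord k u + 1) * (case p of (v, w) \<Rightarrow> cf P v * cf Q w) =
         (case p of (v, w) \<Rightarrow> (of_nat (coord k v) + of_nat (coord k w)) * (cf P v * cf Q w))"
        by (simp add: pe)
    qed
    then show ?thesis by (simp add: distrib_right sum.distrib case_prod_beta)
  qed
  also have "(\<Sum>(v, w)\<in>pairs ?u'. of_nat (coord k v) * (cf P v * cf Q w)) = cf (dd k P * Q) u"
    using sum_pairs_shift[OF u, of k "\<lambda>v w. cf P v * cf Q w"] u
    by (simp add: cf_times dd.rep_eq mult.assoc)
  also have "(\<Sum>(v, w)\<in>pairs ?u'. of_nat (coord k w) * (cf P v * cf Q w)) = cf (P * dd k Q) u"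
  proof -
    have "(\<Sum>(v, w)\<in>pairs ?u'. of_nat (coord k w) * (cf P v * cf Q w)) =
          (\<Sum>(v, w)\<in>pairs ?u'. of_nat (coord k v) * (cf P w * cf Q v))"
      by (rule sum_pairs_swap)
    also have "\<dots> = (\<Sum>(v, w)\<in>pairs u. of_nat (coord k v + 1) * (cf P w * cf Q (madd v (eu k))))"
      by (rule sum_pairs_shift[OF u])
    also have "\<dots> = (\<Sum>(v, w)\<in>pairs u. of_nat (coord k w + 1) * (cf P v * cf Q (madd w (eu k))))"
      by (rule sum_pairs_swap)
    also have "\<dots> = cf (P * dd k Q) u"
      using u by (simp add: cf_times dd.rep_eq mult.assoc mult.left_commute)
    finally show ?thesis .
  qed
  finally show "cf (dd k (P * Q)) u = cf (dd k P * Q + P * dd k Q) u" by (simp add: cf_plus)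
qed


definition lin :: "nat \<Rightarrow> (nat \<Rightarrow> 'a) \<Rightarrow> 'a::comm_ring_1 ps" where
  "lin n v = (\<Sum>i<n. kc (v i) * Xm (i, False) + kc (v (n + i)) * Xm (i, True))"

definition pb :: "nat \<Rightarrow> 'a::comm_ring_1 ps \<Rightarrow> 'a ps \<Rightarrow> 'a ps" where
  "pb n P Q = (\<Sum>i<n. dd (i, False) P * dd (i, True) Q - dd (i, True) P * dd (i, False) Q)"

definition dv :: "nat \<Rightarrow> (nat \<Rightarrow> 'a) \<Rightarrow> 'a::comm_ring_1 ps \<Rightarrow> 'a ps" where
  "dv n w P = (\<Sum>i<n. kc (w i) * dd (i, False) P + kc (w (n + i)) * dd (i, True) P)"

lemma dd_kc_mult: "dd k (kc c * P) = kc c * dd k P"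
  by (simp add: dd_mult)

lemma dd_lin: "dd (j, b) (lin n v) = kc (if j < n then (if b then v (n + j) else v j) else 0)"
proof -
  have "dd (j, b) (lin n v) = (\<Sum>i<n. kc (v i) * kc (if (j, b) = (i, False) then 1 else 0)
     + kc (v (n + i)) * kc (if (j, b) = (i, True) then 1 else 0))"
    by (simp add: lin_def dd_sum dd_add dd_kc_mult dd_Xm)
  also have "\<dots> = (\<Sum>i<n. kc (if i = j then (if b then v (n + j) else v j) else 0))"
    by (rule sum.cong) (auto simp: kc_add[symmetric] kc_mult[symmetric])
  also have "\<dots> = kc (if j < n then (if b then v (n + j) else v j) else 0)"
    by (simp add: kc_sum[symmetric])
  finally show ?thesis .
qed

lemma pb_add_left: "pb n (P + P') Q = pb n P Q + pb n P' Q"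
  unfolding pb_def sum.distrib[symmetric] by (rule sum.cong) (simp_all add: dd_add algebra_simps)
lemma pb_add_right: "pb n Q (P + P') = pb n Q P + pb n Q P'"
  unfolding pb_def sum.distrib[symmetric] by (rule sum.cong) (simp_all add: dd_add algebra_simps)
lemma pb_zero_left[simp]: "pb n 0 Q = 0" by (simp add: pb_def)
lemma pb_zero_right[simp]: "pb n Q 0 = 0" by (simp add: pb_def)
lemma pb_antisym: "pb n P Q = - pb n Q P"
  unfolding pb_def sum_negf[symmetric] by (rule sum.cong) (simp_all add: algebra_simps)
lemma pb_mult_right: "pb n P (Q * R) = pb n P Q * R + Q * pb n P R"
  unfolding pb_def sum_distrib_left sum_distrib_right sum.distrib[symmetric]
  by (rule sum.cong) (simp_all add: dd_mult algebra_simps)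
lemma pb_mult_left: "pb n (Q * R) P = pb n Q P * R + Q * pb n R P"
proof -
  have "pb n (Q * R) P = - pb n P (Q * R)" by (rule pb_antisym)
  also have "\<dots> = - (pb n P Q * R + Q * pb n P R)" by (simp add: pb_mult_right)
  also have "\<dots> = (- pb n P Q) * R + Q * (- pb n P R)" by (simp add: algebra_simps)
  also have "\<dots> = pb n Q P * R + Q * pb n R P" by (simp add: pb_antisym[of n Q P] pb_antisym[of n R P])
  finally show ?thesis .
qed
lemma pb_uminus_left: "pb n (- P) Q = - pb n P Q"
  unfolding pb_def sum_negf[symmetric] by (rule sum.cong) (simp_all add: dd_uminus algebra_simps)

lemma pb_lin_lin: "pb n (lin n u) (lin n v) = kc (omega n u v)"
  by (simp add: pb_def dd_lin omega_def kc_sum kc_diff kc_mult)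

lemma pb_lin_right: "pb n P (lin n v) = dv n (\<lambda>i. if i < n then v (n + i) else - v (i - n)) P"
  unfolding pb_def dv_def
proof (rule sum.cong[OF refl])
  fix i assume "i \<in> {..<n}"
  then have i: "i < n" by simp
  show "dd (i, False) P * dd (i, True) (lin n v) - dd (i, True) P * dd (i, False) (lin n v) =
    kc (if i < n then v (n + i) else - v (i - n)) * dd (i, False) P +
    kc (if n + i < n then v (n + (n + i)) else - v (n + i - n)) * dd (i, True) P"
    using i by (simp add: dd_lin kc_uminus mult.commute)
qed

inductive_set Iset :: "nat \<Rightarrow> (nat \<Rightarrow> 'a::comm_ring_1) set \<Rightarrow> 'a ps set" for n L where
  I0: "0 \<in> Iset n L"
| Igen: "l \<in> L \<Longrightarrow> lin n l * q \<in> Iset n L"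
| Iadd: "P \<in> Iset n L \<Longrightarrow> Q \<in> Iset n L \<Longrightarrow> P + Q \<in> Iset n L"

lemma I_mult: "P \<in> Iset n L \<Longrightarrow> P * R \<in> Iset n L"
proof (induction rule: Iset.induct)
  case I0 then show ?case using Iset.I0 by simp
next
  case (Igen l q) then show ?case using Iset.Igen[of l L n "q * R"] by (simp add: mult.assoc)
next
  case (Iadd P Q) then show ?case using Iset.Iadd by (simp add: distrib_right)
qed

lemma I_mult_left: "P \<in> Iset n L \<Longrightarrow> R * P \<in> Iset n L"
  using I_mult[of P n L R] by (simp add: mult.commute)

lemma I_uminus: "P \<in> Iset n L \<Longrightarrow> - P \<in> Iset n L"
proof -
  assume "P \<in> Iset n L"
  then have "P * (- 1) \<in> Iset n L" by (rule I_mult)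
  then show ?thesis by simp
qed

lemma I_diff: "P \<in> Iset n L \<Longrightarrow> Q \<in> Iset n L \<Longrightarrow> P - Q \<in> Iset n L"
proof -
  assume "P \<in> Iset n L" "Q \<in> Iset n L"
  then have "P + - Q \<in> Iset n L" using I_uminus Iset.Iadd by blast
  then show ?thesis by simp
qed

lemma I_sum: "(\<And>i. i \<in> A \<Longrightarrow> f i \<in> Iset n L) \<Longrightarrow> (\<Sum>i\<in>A. f i) \<in> Iset n L"
proof (induction A rule: infinite_finite_induct)
  case (infinite A) then show ?case using Iset.I0 by simp
next
  case empty then show ?case using Iset.I0 by simp
next
  case (insert x F)
  then have a: "f x \<in> Iset n L" "sum f F \<in> Iset n L" by auto
  show ?case using insert(1,2) Iset.Iadd[OF a] by simp
qed

lemma pb_lin_I: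
  assumes iso: "\<And>l l'. l \<in> L \<Longrightarrow> l' \<in> L \<Longrightarrow> omega n l l' = 0" and l: "l \<in> L"
  shows "Q \<in> Iset n L \<Longrightarrow> pb n (lin n l) Q \<in> Iset n L"
proof (induction rule: Iset.induct)
  case I0 then show ?case by (simp add: Iset.I0)
next
  case (Igen l' q)
  have "pb n (lin n l) (lin n l' * q) = lin n l' * pb n (lin n l) q"
    using iso[OF l Igen] by (simp add: pb_mult_right pb_lin_lin)
  then show ?case using Iset.Igen[OF Igen] by simp
next
  case (Iadd P Q) then show ?case by (simp add: pb_add_right Iset.Iadd)
qed

lemma pb_I:
  assumes iso: "\<And>l l'. l \<in> L \<Longrightarrow> l' \<in> L \<Longrightarrow> omega n l l' = 0" and Q: "Q \<in> Iset n L"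
  shows "P \<in> Iset n L \<Longrightarrow> pb n P Q \<in> Iset n L"
proof (induction rule: Iset.induct)
  case I0 then show ?case by (simp add: Iset.I0)
next
  case (Igen l q)
  have "pb n (lin n l * q) Q = pb n (lin n l) Q * q + lin n l * pb n q Q"
    by (simp add: pb_mult_left)
  then show ?case using I_mult[OF pb_lin_I[OF iso Igen Q]] Iset.Igen[OF Igen]
    by (simp add: Iset.Iadd)
next
  case (Iadd P P') then show ?case by (simp add: pb_add_left Iset.Iadd)
qed


definition ev :: "nat \<Rightarrow> nat \<Rightarrow> 'a::comm_ring_1" where
  "ev j = (\<lambda>i. if i = j then 1 else 0)"

definition degn :: "nat \<Rightarrow> mi \<Rightarrow> nat" where
  "degn n u = (\<Sum>i<n. fst u i + snd u i)"

lemma sum_2n: fixes n :: nat shows "(\<Sum>j<2*n. f j) = (\<Sum>j<n. f j) + (\<Sum>j<n. f (n + j))"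
proof -
  have "{..<2*n} = {..<n} \<union> (\<lambda>j. n + j) ` {..<n}"
  proof (intro equalityI subsetI)
    fix x assume x: "x \<in> {..<2*n}"
    show "x \<in> {..<n} \<union> (\<lambda>j. n + j) ` {..<n}"
    proof (cases "x < n")
      case True then show ?thesis by simp
    next
      case False
      then have "x = n + (x - n)" "x - n < n" using x by auto
      then show ?thesis by (metis UnI2 lessThan_iff rev_image_eqI)
    qed
  qed auto
  moreover have "{..<n} \<inter> (\<lambda>j. n + j) ` {..<n} = {}" by auto
  ultimately have "(\<Sum>j<2*n. f j) = (\<Sum>j<n. f j) + (\<Sum>j\<in>(\<lambda>j. n + j) ` {..<n}. f j)"
    by (simp add: sum.union_disjoint)
  also have "(\<Sum>j\<in>(\<lambda>j. n + j) ` {..<n}. f j) = (\<Sum>j<n. f (n + j))"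
    by (simp add: sum.reindex)
  finally show ?thesis .
qed

lemma sum_if_eq: fixes n :: nat shows "j < n \<Longrightarrow> (\<Sum>i<n. if i = j then f i else (0::'b::comm_monoid_add)) = f j"
  by (subst sum.delta) auto

lemma lin_unit1: "j < n \<Longrightarrow> lin n (ev j) = (Xm (j, False) :: 'a::comm_ring_1 ps)"
proof -
  assume j: "j < n"
  have "lin n (ev j) = (\<Sum>i<n. if i = j then (Xm (i, False) :: 'a ps) else 0)"
    unfolding lin_def by (rule sum.cong) (use j in \<open>auto simp: ev_def\<close>)
  then show ?thesis using j by (simp add: sum_if_eq)
qed

lemma lin_unit2: "j < n \<Longrightarrow> lin n (ev (n + j)) = (Xm (j, True) :: 'a::comm_ring_1 ps)"
proof -
  assume j: "j < n"
  have "lin n (ev (n + j)) = (\<Sum>i<n. if i = j then (Xm (i, True) :: 'a ps) else 0)"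
    unfolding lin_def by (rule sum.cong) (use j in \<open>auto simp: ev_def\<close>)
  then show ?thesis using j by (simp add: sum_if_eq)
qed

lemma dv_unit1: "j < n \<Longrightarrow> dv n (ev j) P = dd (j, False) (P :: 'a::comm_ring_1 ps)"
proof -
  assume j: "j < n"
  have "dv n (ev j) P = (\<Sum>i<n. if i = j then dd (i, False) P else 0)"
    unfolding dv_def by (rule sum.cong) (use j in \<open>auto simp: ev_def\<close>)
  then show ?thesis using j by (simp add: sum_if_eq)
qed

lemma dv_unit2: "j < n \<Longrightarrow> dv n (ev (n + j)) P = dd (j, True) (P :: 'a::comm_ring_1 ps)"
proof -
  assume j: "j < n"
  have "dv n (ev (n + j)) P = (\<Sum>i<n. if i = j then dd (i, True) P else 0)"
    unfolding dv_def by (rule sum.cong) (use j in \<open>auto simp: ev_def\<close>)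
  then show ?thesis using j by (simp add: sum_if_eq)
qed

lemma lin_expand: "lin n v = (\<Sum>j<2*n. kc (v j) * lin n (ev j))"
  unfolding sum_2n lin_def[of n v] sum.distrib
  by (intro arg_cong2[where f="(+)"] sum.cong) (simp_all add: lin_unit1 lin_unit2)

lemma dv_expand: "dv n w P = (\<Sum>j<2*n. kc (w j) * dv n (ev j) P)"
  unfolding sum_2n dv_def[of n w] sum.distrib
  by (intro arg_cong2[where f="(+)"] sum.cong) (simp_all add: dv_unit1 dv_unit2)

lemma lin_add: "lin n (\<lambda>i. u i + v i) = lin n u + lin n v"
  unfolding lin_def sum.distrib[symmetric] by (rule sum.cong) (simp_all add: kc_add algebra_simps)

lemma lin_diff: "lin n (\<lambda>i. u i - v i) = lin n u - lin n v"
  unfolding lin_def sum_subtractf[symmetric] by (rule sum.cong) (simp_all add: kc_diff algebra_simps)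

lemma dv_cong: "(\<And>i. i < n \<Longrightarrow> w i = w' i \<and> w (n + i) = w' (n + i)) \<Longrightarrow> dv n w P = dv n w' P"
  unfolding dv_def by (rule sum.cong) auto

lemma cf_Xm_dd: "cf (Xm k * dd k P) u = of_nat (coord k u) * cf P u"
proof (cases "coord k u \<ge> 1")
  case True
  have c: "coord k u = coord k (mdec k u) + 1"
    using arg_cong[OF madd_mdec[OF True], of "coord k"] by (simp add: coord_eu)
  show ?thesis using True c by (simp add: cf_Xm_mult dd.rep_eq madd_mdec)
next
  case False then have z: "coord k u = 0" by simp
  show ?thesis by (simp add: cf_Xm_mult z)
qed

definition euler :: "nat \<Rightarrow> 'a::comm_ring_1 ps \<Rightarrow> 'a ps" where
  "euler n P = (\<Sum>j<2*n. lin n (ev j) * dv n (ev j) P)"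

lemma cf_euler: "cf (euler n P) u = of_nat (degn n u) * cf P u"
proof -
  have "euler n P = (\<Sum>j<n. Xm (j, False) * dd (j, False) P) + (\<Sum>j<n. Xm (j, True) * dd (j, True) P)"
    unfolding euler_def sum_2n
    by (intro arg_cong2[where f="(+)"] sum.cong) (simp_all add: lin_unit1 lin_unit2 dv_unit1 dv_unit2)
  then show ?thesis
    by (simp add: cf_plus cf_sum cf_Xm_dd degn_def coord_def sum_distrib_right
        sum.distrib distrib_right)
qed


lift_definition Rn :: "nat \<Rightarrow> 'a::field ps \<Rightarrow> 'a ps" is
  "\<lambda>n Q u. Q u / of_nat (degn n u)" by simp

lift_definition R1n :: "nat \<Rightarrow> 'a::field ps \<Rightarrow> 'a ps" is
  "\<lambda>n Q u. Q u / of_nat (degn n u + 1)" by simp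

definition okp :: "nat \<Rightarrow> 'a::comm_ring_1 ps \<Rightarrow> bool" where
  "okp n P \<longleftrightarrow> (\<forall>u. cf P u \<noteq> 0 \<longrightarrow> supp_ok n (fst u) \<and> supp_ok n (snd u))"

lemma cf_lin_mult: "cf (lin n v * q) u = (\<Sum>i<n.
    v i * (if coord (i, False) u \<ge> 1 then cf q (mdec (i, False) u) else 0) +
    v (n + i) * (if coord (i, True) u \<ge> 1 then cf q (mdec (i, True) u) else 0))"
  unfolding lin_def sum_distrib_right cf_sum distrib_right
  by (simp add: cf_plus mult.assoc cf_kc_mult cf_Xm_mult)

lemma degn_madd: "degn n (madd u v) = degn n u + degn n v"
  by (simp add: degn_def madd_def sum.distrib)

lemma degn_eu: "i < n \<Longrightarrow> degn n (eu (i, b)) = 1"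
  by (cases b) (simp_all add: degn_def eu_def unitv_def sum.delta)

lemma degn_mdec: "i < n \<Longrightarrow> coord (i, b) u \<ge> 1 \<Longrightarrow> degn n (mdec (i, b) u) + 1 = degn n u"
  using arg_cong[OF madd_mdec, of "(i, b)" u "degn n"] by (simp add: degn_madd degn_eu)

lemma Rn_lin: "Rn n (lin n v * q) = lin n v * R1n n (q :: 'a::field ps)"
proof (rule ps_eqI)
  fix u :: mi assume "fs u"
  let ?d = "of_nat (degn n u) :: 'a"
  have "cf (Rn n (lin n v * q)) u = cf (lin n v * q) u / ?d" by (simp add: Rn.rep_eq)
  also have "\<dots> = (\<Sum>i<n.
    v i * (if coord (i, False) u \<ge> 1 then cf q (mdec (i, False) u) / ?d else 0) +
    v (n + i) * (if coord (i, True) u \<ge> 1 then cf q (mdec (i, True) u) / ?d else 0))"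
    unfolding cf_lin_mult sum_divide_distrib by (rule sum.cong) (auto simp: add_divide_distrib)
  also have "\<dots> = cf (lin n v * R1n n q) u"
    unfolding cf_lin_mult
  proof (rule sum.cong[OF refl])
    fix i assume "i \<in> {..<n}"
    then have i: "i < n" by simp
    have e: "coord (i, b) u \<ge> 1 \<Longrightarrow> ?d = of_nat (degn n (mdec (i, b) u) + 1)" for b
      using degn_mdec[OF i, of b u] by simp
    show "v i * (if coord (i, False) u \<ge> 1 then cf q (mdec (i, False) u) / ?d else 0) +
      v (n + i) * (if coord (i, True) u \<ge> 1 then cf q (mdec (i, True) u) / ?d else 0) =
      v i * (if coord (i, False) u \<ge> 1 then cf (R1n n q) (mdec (i, False) u) else 0) +
      v (n + i) * (if coord (i, True) u \<ge> 1 then cf (R1n n q) (mdec (i, True) u) else 0)"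
      using e[of False] e[of True] by (simp add: R1n.rep_eq)
  qed
  finally show "cf (Rn n (lin n v * q)) u = cf (lin n v * R1n n q) u" .
qed

lemma Rn_add: "Rn n (P + Q) = Rn n P + Rn n Q"
  by (rule ps_eqI) (simp add: Rn.rep_eq cf_plus add_divide_distrib)
lemma Rn_0: "Rn n 0 = 0"
  by (rule ps_eqI) (simp add: Rn.rep_eq cf_zero)

lemma Rn_I: "P \<in> Iset n L \<Longrightarrow> Rn n P \<in> Iset n L"
proof (induction rule: Iset.induct)
  case I0 then show ?case by (simp add: Rn_0 Iset.I0)
next
  case (Igen l q) then show ?case by (simp add: Rn_lin Iset.Igen)
next
  case (Iadd P Q) then show ?case by (simp add: Rn_add Iset.Iadd)
qed

lemma degn_mz: "degn n mz = 0" by (simp add: degn_def)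

lemma Rn_euler:
  fixes P :: "'a::field_char_0 ps"
  assumes "okp n P"
  shows "Rn n (euler n P) = P - kc (cf P mz)"
proof (rule ps_eqI)
  fix u :: mi assume "fs u"
  show "cf (Rn n (euler n P)) u = cf (P - kc (cf P mz)) u"
  proof (cases "degn n u = 0")
    case False
    then have "u \<noteq> mz" using degn_mz by metis
    then show ?thesis using False by (simp add: Rn.rep_eq cf_euler cf_minus kc.rep_eq)
  next
    case True
    have "cf P u = 0" if nz: "u \<noteq> mz"
    proof (rule ccontr)
      assume h: "cf P u \<noteq> 0"
      have "supp_ok n (fst u) \<and> supp_ok n (snd u)" using assms h unfolding okp_def by blast
      then have s: "supp_ok n (fst u)" "supp_ok n (snd u)" by auto
      have "\<forall>i<n. fst u i = 0 \<and> snd u i = 0" using True by (simp add: degn_def)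
      then have "fst u = (\<lambda>_. 0)" "snd u = (\<lambda>_. 0)" using s
        unfolding supp_ok_def fun_eq_iff by (metis not_less)+
      then have "u = mz" by (cases u) simp
      with nz show False by simp
    qed
    then show ?thesis using True by (auto simp: Rn.rep_eq cf_euler cf_minus kc.rep_eq)
  qed
qed


lemma vsp_expand:
  assumes "u \<in> Vsp n"
  shows "(\<lambda>i. \<Sum>j<2*n. u j * ev j i) = (u :: nat \<Rightarrow> 'a::field_char_0)"
proof
  fix i
  have "(\<Sum>j<2*n. u j * ev j i) = (\<Sum>j<2*n. if j = i then u j else 0)"
    by (rule sum.cong) (auto simp: ev_def)
  also have "\<dots> = u i" using assms by (subst sum.delta) (auto simp: Vsp_def not_less)
  finally show "(\<Sum>j<2*n. u j * ev j i) = u i" .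
qed

lemma memL:
  assumes "lagrangian n L"
  shows "v \<in> L \<longleftrightarrow> v \<in> Vsp n \<and> (\<forall>u\<in>L. omega n u v = 0)"
proof -
  have e: "L = {v \<in> Vsp n. \<forall>u\<in>L. omega n u v = 0}" using assms by (simp add: lagrangian_def)
  show ?thesis using arg_cong[OF e, of "\<lambda>S. v \<in> S"] by simp
qed

lemma omega_zero: "omega n u (\<lambda>_. 0) = 0" by (simp add: omega_def)
lemma omega_add: "omega n u (\<lambda>i. v i + w i) = omega n u v + omega n u w"
  by (simp add: omega_def sum.distrib[symmetric] algebra_simps)
lemma omega_scale: "omega n u (\<lambda>i. c * v i) = c * omega n u v"
  by (simp add: omega_def sum_distrib_left algebra_simps)

lemma rev_key:
  fixes L :: "(nat \<Rightarrow> 'a::field_char_0) set" and P :: "'a ps"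
  assumes lag: "lagrangian n L" and ok: "okp n P"
    and hyp: "\<And>l. l \<in> L \<Longrightarrow> pb n P (lin n l) \<in> Iset n L"
  shows "P - kc (cf P mz) \<in> Iset n L"
proof -
  have LV: "v \<in> Vsp n" if "v \<in> L" for v using memL[OF lag, of v] that by blast
  have Lo: "omega n u v = 0" if "v \<in> L" "u \<in> L" for u v using memL[OF lag, of v] that by blast
  have LI: "v \<in> L" if "v \<in> Vsp n" "\<And>u. u \<in> L \<Longrightarrow> omega n u v = 0" for v
    using memL[OF lag, of v] that by blast
  have z: "(\<lambda>_. 0) \<in> L" by (rule LI) (simp_all add: omega_zero Vsp_def)
  have ad: "(\<lambda>i. u i + v i) \<in> L" if "u \<in> L" "v \<in> L" for u v
    by (rule LI) (use LV[OF that(1)] LV[OF that(2)] Lo that in \<open>simp_all add: omega_add Vsp_def\<close>)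
  have sc: "(\<lambda>i. c * u i) \<in> L" if "u \<in> L" for c u
    by (rule LI) (use LV[OF that] Lo that in \<open>simp_all add: omega_scale Vsp_def\<close>)
  obtain p where p_add: "\<forall>u v. p (\<lambda>i. u i + v i) = (\<lambda>i. p u i + p v i)"
    and p_sc: "\<forall>c u. p (\<lambda>i. c * u i) = (\<lambda>i. c * p u i)"
    and pL: "\<forall>u. p u \<in> L" and pid: "\<forall>l\<in>L. p l = l"
    using proj_exists[OF z ad sc] by blast
  have p0: "p (\<lambda>_. 0) = (\<lambda>_. 0)"
    using p_sc[rule_format, of 0 "\<lambda>_. 0"] by simp
  have p_sum: "p (\<lambda>i. \<Sum>j\<in>A. c j * f j i) = (\<lambda>i. \<Sum>j\<in>A. c j * p (f j) i)" if "finite A" for A c f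
    using that
  proof (induction A rule: finite_induct)
    case empty then show ?case using p0 by simp
  next
    case (insert x F)
    have "p (\<lambda>i. \<Sum>j\<in>insert x F. c j * f j i) = p (\<lambda>i. c x * f x i + (\<Sum>j\<in>F. c j * f j i))"
      using insert(1,2) by simp
    also have "\<dots> = (\<lambda>i. c x * p (f x) i + p (\<lambda>i. \<Sum>j\<in>F. c j * f j i) i)"
      using p_add p_sc by simp
    also have "\<dots> = (\<lambda>i. \<Sum>j\<in>insert x F. c j * p (f j) i)"
      using insert by simp
    finally show ?case .
  qed
  define d where "d j = (\<lambda>i. ev j i - p (ev j) i)" for j
  define r where "r k = (\<lambda>j. if j < 2*n then d j k else 0)" for k
  define lk where "lk k = (\<lambda>i. if i < n then - r k (n + i) else if i < 2*n then r k (i - n) else 0)" for k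
  have lkL: "lk k \<in> L" for k
  proof -
    have "lk k \<in> Vsp n" by (simp add: Vsp_def lk_def)
    moreover have "omega n u (lk k) = 0" if u: "u \<in> L" for u
    proof -
      have uV: "u \<in> Vsp n" using u by (rule LV)
      have "omega n u (lk k) = (\<Sum>i<n. u i * r k i + u (n + i) * r k (n + i))"
        unfolding omega_def by (rule sum.cong) (auto simp: lk_def)
      also have "\<dots> = (\<Sum>j<2*n. u j * r k j)" by (simp add: sum_2n sum.distrib)
      also have "\<dots> = (\<Sum>j<2*n. u j * ev j k) - (\<Sum>j<2*n. u j * p (ev j) k)"
        by (simp add: r_def d_def sum_subtractf[symmetric] algebra_simps)
      also have "(\<Sum>j<2*n. u j * ev j k) = u k"
        using fun_cong[OF vsp_expand[OF uV], of k] .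
      also have "(\<Sum>j<2*n. u j * p (ev j) k) = p (\<lambda>i. \<Sum>j<2*n. u j * ev j i) k"
        using fun_cong[OF p_sum[of "{..<2*n}" u ev], of k] by simp
      also have "\<dots> = u k" using vsp_expand[OF uV] pid u by simp
      finally show ?thesis by simp
    qed
    ultimately show ?thesis by (intro LI) auto
  qed
  have dvr: "dv n (r k) P = pb n P (lin n (lk k))" for k
    unfolding pb_lin_right by (rule dv_cong) (auto simp: lk_def)
  have lsplit: "lin n (ev j) = lin n (p (ev j)) + lin n (d j)" for j
  proof -
    have "(\<lambda>i. p (ev j) i + d j i) = ev j" by (simp add: d_def)
    then show ?thesis using lin_add[of n "p (ev j)" "d j"] by simp
  qed
  have part2: "(\<Sum>j<2*n. lin n (d j) * dv n (ev j) P) = (\<Sum>k<2*n. lin n (ev k) * dv n (r k) P)"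
  proof -
    have "(\<Sum>j<2*n. lin n (d j) * dv n (ev j) P) =
          (\<Sum>j<2*n. \<Sum>k<2*n. kc (d j k) * lin n (ev k) * dv n (ev j) P)"
      by (subst lin_expand) (simp add: sum_distrib_right)
    also have "\<dots> = (\<Sum>k<2*n. \<Sum>j<2*n. kc (d j k) * lin n (ev k) * dv n (ev j) P)"
      by (rule sum.swap)
    also have "\<dots> = (\<Sum>k<2*n. lin n (ev k) * (\<Sum>j<2*n. kc (r k j) * dv n (ev j) P))"
      by (rule sum.cong) (auto simp: sum_distrib_left r_def intro!: sum.cong)
    also have "\<dots> = (\<Sum>k<2*n. lin n (ev k) * dv n (r k) P)"
      by (simp add: dv_expand[of n "r _"])
    finally show ?thesis .
  qed
  have eul: "euler n P = (\<Sum>j<2*n. lin n (p (ev j)) * dv n (ev j) P) +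
                         (\<Sum>k<2*n. lin n (ev k) * dv n (r k) P)"
    unfolding euler_def lsplit distrib_right sum.distrib part2 ..
  have "euler n P \<in> Iset n L"
    unfolding eul
  proof (rule Iset.Iadd)
    show "(\<Sum>j<2*n. lin n (p (ev j)) * dv n (ev j) P) \<in> Iset n L"
      using pL by (intro I_sum Iset.Igen) auto
    show "(\<Sum>k<2*n. lin n (ev k) * dv n (r k) P) \<in> Iset n L"
      by (intro I_sum I_mult_left) (simp add: dvr hyp lkL)
  qed
  then have "Rn n (euler n P) \<in> Iset n L" by (rule Rn_I)
  then show ?thesis using Rn_euler[OF ok] by simp
qed


lemma supp_ok_fin: "supp_ok n a \<Longrightarrow> finite {i. a i \<noteq> 0}"
  by (rule finite_subset[of _ "{..<n}"]) (auto simp: supp_ok_def not_less[symmetric])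

lemma supp_ok_fs: "supp_ok n a \<Longrightarrow> supp_ok n b \<Longrightarrow> fs (a, b)"
  using supp_ok_fin[of n a] supp_ok_fin[of n b] unfolding fs_def by simp

lemma k_le_sum: "supp_ok n k \<Longrightarrow> i < n \<Longrightarrow> k i \<le> (\<Sum>j<n. k j)"
  by (rule member_le_sum) auto

lemma finite_wterms: "finite (wterms n A B M)"
proof -
  define bd where "bd i = (if i < n then A i + B i + M else 0)" for i
  let ?S = "{a. \<forall>i. a i \<le> bd i}"
  have fS: "finite ?S"
    by (rule finite_bounded_funs, rule finite_subset[of _ "{..<n}"]) (auto simp: bd_def split: if_splits)
  have sub: "t \<in> ?S \<times> ?S \<times> {..M} \<times> ?S \<times> ?S \<times> {..M} \<times> ?S" if t: "t \<in> wterms n A B M" for t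
  proof -
    obtain a b m c d p k where te: "t = (a, b, m, c, d, p, k)" by (cases t)
    from t have h: "supp_ok n a" "supp_ok n b" "supp_ok n c" "supp_ok n d" "supp_ok n k"
      "\<forall>i. k i \<le> b i \<and> k i \<le> c i \<and> A i = a i + c i - k i \<and> B i = b i + d i - k i"
      "M = m + p + (\<Sum>i<n. k i)"
      by (auto simp: te wterms_def)
    have kM: "k i \<le> M" if "i < n" for i using k_le_sum[OF h(5) that] h(7) by simp
    have "a \<in> ?S" "b \<in> ?S" "c \<in> ?S" "d \<in> ?S" "k \<in> ?S"
    proof -
      have bnd: "a i \<le> bd i \<and> b i \<le> bd i \<and> c i \<le> bd i \<and> d i \<le> bd i \<and> k i \<le> bd i" for i
      proof (cases "i < n")
        case True
        have "k i \<le> b i" "k i \<le> c i" "A i = a i + c i - k i" "B i = b i + d i - k i"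
          using h(6) by auto
        moreover have "k i \<le> M" using kM True by simp
        ultimately show ?thesis using True unfolding bd_def by simp linarith
      next
        case False
        then show ?thesis using h(1-5) by (simp add: bd_def supp_ok_def)
      qed
      show "a \<in> ?S" "b \<in> ?S" "c \<in> ?S" "d \<in> ?S" "k \<in> ?S" using bnd by auto
    qed
    moreover have "m \<le> M" "p \<le> M" using h(7) by auto
    ultimately show ?thesis by (simp add: te)
  qed
  have "finite (?S \<times> ?S \<times> {..M} \<times> ?S \<times> ?S \<times> {..M} \<times> ?S)"
    using fS by (intro finite_cartesian_product) simp_all
  moreover have "wterms n A B M \<subseteq> ?S \<times> ?S \<times> {..M} \<times> ?S \<times> ?S \<times> {..M} \<times> ?S"
    using sub by blast
  ultimately show ?thesis by (rule finite_subset[rotated])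
qed


definition piece :: "nat \<Rightarrow> (nat \<Rightarrow> nat) \<Rightarrow> (nat \<Rightarrow> nat) \<Rightarrow> nat \<Rightarrow> nat \<Rightarrow> nat \<Rightarrow> (nat \<Rightarrow> nat) \<Rightarrow>
   ((nat \<Rightarrow> nat) \<times> (nat \<Rightarrow> nat) \<times> nat \<times> (nat \<Rightarrow> nat) \<times> (nat \<Rightarrow> nat) \<times> nat \<times> (nat \<Rightarrow> nat)) set" where
  "piece n A B M m0 p0 k0 = {(a, b, m, c, d, p, k). (a, b, m, c, d, p, k) \<in> wterms n A B M \<and>
      m = m0 \<and> p = p0 \<and> k = k0}"

lemma supp_ok_le: "supp_ok n A \<Longrightarrow> (\<And>i. a i \<le> A i) \<Longrightarrow> supp_ok n a"
  unfolding supp_ok_def by (metis le_zero_eq)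

lemma supp_ok_add: "supp_ok n a \<Longrightarrow> supp_ok n b \<Longrightarrow> supp_ok n (\<lambda>i. a i + b i)"
  unfolding supp_ok_def by simp

definition pj :: "(nat \<Rightarrow> nat) \<Rightarrow> _ \<Rightarrow> mi \<times> mi" where
  "pj k0 t = (case t of (a, b, m, c, d, p, k) \<Rightarrow> ((a, \<lambda>i. b i - k0 i), (\<lambda>i. c i - k0 i, d)))"
definition pin :: "nat \<Rightarrow> nat \<Rightarrow> (nat \<Rightarrow> nat) \<Rightarrow> mi \<times> mi \<Rightarrow> _" where
  "pin m0 p0 k0 q = (case q of ((a, b), (c, d)) \<Rightarrow> (a, \<lambda>i. b i + k0 i, m0, \<lambda>i. c i + k0 i, d, p0, k0))"

lemma wpiece_facts:
  assumes sA: "supp_ok n A" and sB: "supp_ok n B" and sk: "supp_ok n k0"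
    and M: "M = m0 + p0 + (\<Sum>i<n. k0 i)"
  shows "t \<in> piece n A B M m0 p0 k0 \<Longrightarrow> pin m0 p0 k0 (pj k0 t) = t"
    and "t \<in> piece n A B M m0 p0 k0 \<Longrightarrow> pj k0 t \<in> pairs (A, B)"
    and "q \<in> pairs (A, B) \<Longrightarrow> pj k0 (pin m0 p0 k0 q) = q"
    and "q \<in> pairs (A, B) \<Longrightarrow> pin m0 p0 k0 q \<in> piece n A B M m0 p0 k0"
proof -
  assume t: "t \<in> piece n A B M m0 p0 k0"
  obtain a b m c d p k where te: "t = (a, b, m, c, d, p, k)" by (cases t)
  from t have h: "supp_ok n a" "supp_ok n b" "supp_ok n c" "supp_ok n d"
    "\<And>i. k0 i \<le> b i" "\<And>i. k0 i \<le> c i" "\<And>i. A i = a i + c i - k0 i" "\<And>i. B i = b i + d i - k0 i"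
    "m = m0" "p = p0" "k = k0"
    by (auto simp: te piece_def wterms_def)
  have eb: "(\<lambda>i. b i - k0 i + k0 i) = b" using h(5) by (simp add: fun_eq_iff)
  have ec: "(\<lambda>i. c i - k0 i + k0 i) = c" using h(6) by (simp add: fun_eq_iff)
  show "pin m0 p0 k0 (pj k0 t) = t"
    by (simp add: te eb ec h(9-11) pin_def pj_def)
  have "madd (a, \<lambda>i. b i - k0 i) (\<lambda>i. c i - k0 i, d) = (A, B)"
    using h(5-8) by (simp add: madd_def fun_eq_iff)
  then show "pj k0 t \<in> pairs (A, B)"
    by (simp add: te pairs_def pj_def)
next
  assume q: "q \<in> pairs (A, B)"
  obtain a b c d where qe: "q = ((a, b), (c, d))" by (cases q) auto
  from q have e: "\<And>i. A i = a i + c i" "\<And>i. B i = b i + d i"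
    by (auto simp: qe pairs_def madd_def fun_eq_iff)
  show "pj k0 (pin m0 p0 k0 q) = q"
    by (simp add: qe pin_def pj_def)
next
  assume q: "q \<in> pairs (A, B)"
  obtain a b c d where qe: "q = ((a, b), (c, d))" by (cases q) auto
  from q have e: "\<And>i. A i = a i + c i" "\<And>i. B i = b i + d i"
    by (auto simp: qe pairs_def madd_def fun_eq_iff)
  have sa: "supp_ok n a" "supp_ok n b" "supp_ok n c" "supp_ok n d"
    using supp_ok_le[OF sA, of a] supp_ok_le[OF sA, of c] supp_ok_le[OF sB, of b] supp_ok_le[OF sB, of d] e
    by auto
  show "pin m0 p0 k0 q \<in> piece n A B M m0 p0 k0"
    using sa sk e M by (simp add: qe piece_def wterms_def supp_ok_add pin_def)
qed

lemma wpiece: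
  assumes sA: "supp_ok n A" and sB: "supp_ok n B" and sk: "supp_ok n k0"
    and M: "M = m0 + p0 + (\<Sum>i<n. k0 i)"
  shows "(\<Sum>(a, b, m, c, d, p, k)\<in>piece n A B M m0 p0 k0. F a b m c d p k) =
    (\<Sum>(v, w)\<in>pairs (A, B). F (fst v) (\<lambda>i. snd v i + k0 i) m0 (\<lambda>i. fst w i + k0 i) (snd w) p0 k0)"
proof -
  note f = wpiece_facts[OF assms]
  let ?g = "\<lambda>(a, b, m, c, d, p, k). F a b m c d p k"
  let ?h = "\<lambda>(v, w). F (fst v) (\<lambda>i. snd v i + k0 i) m0 (\<lambda>i. fst w i + k0 i) (snd w) p0 k0"
  have gh: "?g (pin m0 p0 k0 q) = ?h q" for q
    by (cases q) (auto simp: pin_def)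
  have "sum ?g (piece n A B M m0 p0 k0) = sum ?h (pairs (A, B))"
  proof (rule sum.reindex_bij_witness[where j="pj k0" and i="pin m0 p0 k0"])
    fix t assume t: "t \<in> piece n A B M m0 p0 k0"
    show "pin m0 p0 k0 (pj k0 t) = t" by (rule f(1)[OF t])
    show "pj k0 t \<in> pairs (A, B)" by (rule f(2)[OF t])
    show "?h (pj k0 t) = ?g t" using gh[of "pj k0 t"] f(1)[OF t] by simp
  next
    fix q assume q: "q \<in> pairs (A, B)"
    show "pj k0 (pin m0 p0 k0 q) = q" by (rule f(3)[OF q])
    show "pin m0 p0 k0 q \<in> piece n A B M m0 p0 k0" by (rule f(4)[OF q])
  qed
  then show ?thesis by simp
qed


lemma supp_zero_sum:
  assumes "supp_ok n k" "(\<Sum>i<n. k i) = 0" shows "k = (\<lambda>_. 0)"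
proof
  fix i show "k i = 0"
  proof (cases "i < n")
    case True then show ?thesis using assms(2) by simp
  next
    case False then show ?thesis using assms(1) by (simp add: supp_ok_def)
  qed
qed

lemma supp_one_sum:
  assumes "supp_ok n k" "(\<Sum>i<n. k i) = 1" shows "\<exists>i<n. k = unitv i"
proof -
  obtain i where i: "i < n" "k i \<noteq> 0"
    using assms(2) by (metis lessThan_iff sum.neutral zero_neq_one)
  have "(\<Sum>j<n. k j) = k i + (\<Sum>j\<in>{..<n} - {i}. k j)"
    using i(1) by (simp add: sum.remove)
  then have e1: "k i + (\<Sum>j\<in>{..<n} - {i}. k j) = 1" using assms(2) by simp
  then have ki: "k i = 1" and rest: "(\<Sum>j\<in>{..<n} - {i}. k j) = 0" using i(2) by linarith+
  have "k = unitv i"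
  proof
    fix j show "k j = unitv i j"
    proof (cases "j = i")
      case True then show ?thesis using ki by (simp add: unitv_def)
    next
      case False
      show ?thesis
      proof (cases "j < n")
        case True then have "k j = 0" using rest False by simp
        then show ?thesis using False by (simp add: unitv_def)
      next
        case c: False then show ?thesis using assms(1) False by (simp add: supp_ok_def unitv_def)
      qed
    qed
  qed
  then show ?thesis using i(1) by blast
qed

lemma wterms_0: "wterms n A B 0 = piece n A B 0 0 0 (\<lambda>_. 0)"
proof (intro equalityI subsetI)
  fix t assume t: "t \<in> wterms n A B 0"
  obtain a b m c d p k where te: "t = (a, b, m, c, d, p, k)" by (cases t)
  from t have "supp_ok n k" "m = 0" "p = 0" "(\<Sum>i<n. k i) = 0" by (auto simp: te wterms_def)
  then show "t \<in> piece n A B 0 0 0 (\<lambda>_. 0)" using t supp_zero_sum by (simp add: te piece_def)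
qed (auto simp: piece_def)

lemma sum_unitv: "i < n \<Longrightarrow> (\<Sum>j<n. unitv i j) = 1"
  by (simp add: unitv_def sum.delta)

lemma supp_unitv: "i < n \<Longrightarrow> supp_ok n (unitv i)"
  by (simp add: supp_ok_def unitv_def)

lemma wterms_1: "wterms n A B 1 = (piece n A B 1 1 0 (\<lambda>_. 0) \<union> piece n A B 1 0 1 (\<lambda>_. 0)) \<union>
    (\<Union>i<n. piece n A B 1 0 0 (unitv i))"
proof (intro equalityI subsetI)
  fix t assume t: "t \<in> wterms n A B 1"
  obtain a b m c d p k where te: "t = (a, b, m, c, d, p, k)" by (cases t)
  from t have sk: "supp_ok n k" and M: "1 = m + p + (\<Sum>i<n. k i)" by (auto simp: te wterms_def)
  show "t \<in> (piece n A B 1 1 0 (\<lambda>_. 0) \<union> piece n A B 1 0 1 (\<lambda>_. 0)) \<union> (\<Union>i<n. piece n A B 1 0 0 (unitv i))"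
  proof (cases "(\<Sum>i<n. k i) = 0")
    case True
    then have "k = (\<lambda>_. 0)" using sk supp_zero_sum by blast
    moreover have "(m = 1 \<and> p = 0) \<or> (m = 0 \<and> p = 1)" using M True by auto
    ultimately show ?thesis using t by (auto simp: te piece_def)
  next
    case False
    then have s1: "(\<Sum>i<n. k i) = 1" and mp: "m = 0" "p = 0" using M by linarith+
    obtain i where "i < n" "k = unitv i" using supp_one_sum[OF sk s1] by blast
    then show ?thesis using t mp by (auto simp: te piece_def)
  qed
qed (auto simp: piece_def)

lemma wcoeff_0: "wcoeff n b c (\<lambda>_. 0) = 1"
  by (simp add: wcoeff_def)

lemma wcoeff_unit: "i < n \<Longrightarrow> wcoeff n b c (unitv i) = - of_nat (b i * c i)"
proof -
  assume i: "i < n"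
  have "(\<Prod>j<n. of_nat (fact (unitv i j) * (b j choose unitv i j) * (c j choose unitv i j)) :: 'a) =
        (\<Prod>j<n. if j = i then of_nat (b i * c i) else 1)"
    by (rule prod.cong) (auto simp: unitv_def)
  also have "\<dots> = of_nat (b i * c i)" using i by (subst prod.delta) auto
  finally show ?thesis using i by (simp add: wcoeff_def sum_unitv)
qed

lemma wmult_eq: "wmult n f g (A, B, M) =
   (\<Sum>(a, b, m, c, d, p, k)\<in>wterms n A B M. wcoeff n b c k * f (a, b, m) * g (c, d, p))"
  by (simp add: wmult_def)

lemma wmult_nsupp: "\<not> (supp_ok n A \<and> supp_ok n B) \<Longrightarrow> wmult n f g (A, B, M) = 0"
proof -
  assume ns: "\<not> (supp_ok n A \<and> supp_ok n B)"
  have "wterms n A B M = {}"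
  proof (rule ccontr)
    assume "wterms n A B M \<noteq> {}"
    then obtain t where t: "t \<in> wterms n A B M" by blast
    obtain a b m c d p k where te: "t = (a, b, m, c, d, p, k)" by (cases t)
    from t have h: "supp_ok n a" "supp_ok n b" "supp_ok n c" "supp_ok n d"
      "\<forall>i. k i \<le> b i \<and> k i \<le> c i \<and> A i = a i + c i - k i \<and> B i = b i + d i - k i"
      by (auto simp: te wterms_def)
    have "supp_ok n A"
      unfolding supp_ok_def
    proof (intro allI impI)
      fix i assume "n \<le> i"
      then have "a i = 0" "c i = 0" using h(1,3) by (auto simp: supp_ok_def)
      then show "A i = 0" using h(5) by simp
    qed
    moreover have "supp_ok n B"
      unfolding supp_ok_def
    proof (intro allI impI)
      fix i assume "n \<le> i"
      then have "b i = 0" "d i = 0" using h(2,4) by (auto simp: supp_ok_def)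
      then show "B i = 0" using h(5) by simp
    qed
    ultimately show False using ns by simp
  qed
  then show ?thesis by (simp add: wmult_eq)
qed

lemma wmult_0:
  assumes "supp_ok n A" "supp_ok n B"
  shows "wmult n f g (A, B, 0) = (\<Sum>(v, w)\<in>pairs (A, B). f (fst v, snd v, 0) * g (fst w, snd w, 0))"
proof -
  have "wmult n f g (A, B, 0) =
     (\<Sum>(a, b, m, c, d, p, k)\<in>piece n A B 0 0 0 (\<lambda>_. 0). wcoeff n b c k * f (a, b, m) * g (c, d, p))"
    by (simp add: wmult_eq wterms_0)
  also have "\<dots> = (\<Sum>(v, w)\<in>pairs (A, B). wcoeff n (\<lambda>i. snd v i + 0) (\<lambda>i. fst w i + 0) (\<lambda>_. 0) *
        f (fst v, \<lambda>i. snd v i + 0, 0) * g (\<lambda>i. fst w i + 0, snd w, 0))"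
    by (rule wpiece) (use assms in \<open>simp_all add: supp_ok_def\<close>)
  also have "\<dots> = (\<Sum>(v, w)\<in>pairs (A, B). f (fst v, snd v, 0) * g (fst w, snd w, 0))"
    by (simp add: wcoeff_0)
  finally show ?thesis .
qed


lemma piece_sub: "piece n A B M m0 p0 k0 \<subseteq> wterms n A B M"
  by (auto simp: piece_def)

lemma finite_piece: "finite (piece n A B M m0 p0 k0)"
  by (rule finite_subset[OF piece_sub finite_wterms])

lemma unitv_same: "unitv i i = 1" by (simp add: unitv_def)

lemma unitv_nz: "unitv i \<noteq> (\<lambda>_. 0)"
  by (auto simp: unitv_def fun_eq_iff)

lemma unitv_inj: "unitv i = unitv j \<Longrightarrow> i = j"
  by (auto simp: unitv_def fun_eq_iff split: if_splits)

lemma wmult_1: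
  assumes sA: "supp_ok n A" and sB: "supp_ok n B"
  shows "wmult n f g (A, B, 1) =
    (\<Sum>(v, w)\<in>pairs (A, B). f (fst v, snd v, 1) * g (fst w, snd w, 0)) +
    (\<Sum>(v, w)\<in>pairs (A, B). f (fst v, snd v, 0) * g (fst w, snd w, 1)) +
    (\<Sum>i<n. \<Sum>(v, w)\<in>pairs (A, B). - of_nat ((snd v i + 1) * (fst w i + 1)) *
        f (fst v, \<lambda>j. snd v j + unitv i j, 0) * g (\<lambda>j. fst w j + unitv i j, snd w, 0))"
proof -
  let ?F = "\<lambda>(a, b, m, c, d, p, k). wcoeff n b c k * f (a, b, m) * g (c, d, p)"
  let ?P1 = "piece n A B 1 1 0 (\<lambda>_. 0)" and ?P2 = "piece n A B 1 0 1 (\<lambda>_. 0)"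
  let ?U = "\<Union>i<n. piece n A B 1 0 0 (unitv i)"
  have d12: "?P1 \<inter> ?P2 = {}" by (auto simp: piece_def)
  have dU: "(?P1 \<union> ?P2) \<inter> ?U = {}" using unitv_nz by (auto simp: piece_def)
  have fU: "finite ?U" by (auto intro: finite_piece)
  have "wmult n f g (A, B, 1) = sum ?F ((?P1 \<union> ?P2) \<union> ?U)"
    unfolding wmult_eq wterms_1 ..
  also have "\<dots> = sum ?F ?P1 + sum ?F ?P2 + sum ?F ?U"
    using d12 dU fU by (simp add: sum.union_disjoint finite_piece)
  also have "sum ?F ?U = (\<Sum>i<n. sum ?F (piece n A B 1 0 0 (unitv i)))"
  proof (rule sum.UNION_disjoint)
    show "finite {..<n}" by simp
    show "\<forall>i\<in>{..<n}. finite (piece n A B 1 0 0 (unitv i))" by (simp add: finite_piece)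
    show "\<forall>i\<in>{..<n}. \<forall>j\<in>{..<n}. i \<noteq> j \<longrightarrow>
        piece n A B 1 0 0 (unitv i) \<inter> piece n A B 1 0 0 (unitv j) = {}"
      using unitv_inj by (auto simp: piece_def)
  qed
  also have "sum ?F ?P1 = (\<Sum>(v, w)\<in>pairs (A, B). f (fst v, snd v, 1) * g (fst w, snd w, 0))"
  proof -
    have "sum ?F ?P1 = (\<Sum>(v, w)\<in>pairs (A, B). wcoeff n (\<lambda>i. snd v i + 0) (\<lambda>i. fst w i + 0) (\<lambda>_. 0) *
        f (fst v, \<lambda>i. snd v i + 0, 1) * g (\<lambda>i. fst w i + 0, snd w, 0))"
      by (rule wpiece) (use assms in \<open>simp_all add: supp_ok_def\<close>)
    then show ?thesis by (simp add: wcoeff_0)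
  qed
  also have "sum ?F ?P2 = (\<Sum>(v, w)\<in>pairs (A, B). f (fst v, snd v, 0) * g (fst w, snd w, 1))"
  proof -
    have "sum ?F ?P2 = (\<Sum>(v, w)\<in>pairs (A, B). wcoeff n (\<lambda>i. snd v i + 0) (\<lambda>i. fst w i + 0) (\<lambda>_. 0) *
        f (fst v, \<lambda>i. snd v i + 0, 0) * g (\<lambda>i. fst w i + 0, snd w, 1))"
      by (rule wpiece) (use assms in \<open>simp_all add: supp_ok_def\<close>)
    then show ?thesis by (simp add: wcoeff_0)
  qed
  also have "(\<Sum>i<n. sum ?F (piece n A B 1 0 0 (unitv i))) =
    (\<Sum>i<n. \<Sum>(v, w)\<in>pairs (A, B). - of_nat ((snd v i + 1) * (fst w i + 1)) *
        f (fst v, \<lambda>j. snd v j + unitv i j, 0) * g (\<lambda>j. fst w j + unitv i j, snd w, 0))"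
  proof (rule sum.cong[OF refl])
    fix i assume "i \<in> {..<n}"
    then have i: "i < n" by simp
    have "sum ?F (piece n A B 1 0 0 (unitv i)) = (\<Sum>(v, w)\<in>pairs (A, B).
        wcoeff n (\<lambda>j. snd v j + unitv i j) (\<lambda>j. fst w j + unitv i j) (unitv i) *
        f (fst v, \<lambda>j. snd v j + unitv i j, 0) * g (\<lambda>j. fst w j + unitv i j, snd w, 0))"
      by (rule wpiece) (use assms i in \<open>simp_all add: supp_unitv sum_unitv\<close>)
    also have "\<dots> = (\<Sum>(v, w)\<in>pairs (A, B). - of_nat ((snd v i + 1) * (fst w i + 1)) *
        f (fst v, \<lambda>j. snd v j + unitv i j, 0) * g (\<lambda>j. fst w j + unitv i j, snd w, 0))"
      by (rule sum.cong) (auto simp: wcoeff_unit[OF i] unitv_same)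
    finally show "sum ?F (piece n A B 1 0 0 (unitv i)) = (\<Sum>(v, w)\<in>pairs (A, B).
        - of_nat ((snd v i + 1) * (fst w i + 1)) *
        f (fst v, \<lambda>j. snd v j + unitv i j, 0) * g (\<lambda>j. fst w j + unitv i j, snd w, 0))" .
  qed
  finally show ?thesis .
qed


lift_definition cl :: "nat \<Rightarrow> (mono \<Rightarrow> 'a::comm_ring_1) \<Rightarrow> 'a ps" is
  "\<lambda>n f u. if fs u \<and> supp_ok n (fst u) \<and> supp_ok n (snd u) then f (fst u, snd u, 0) else 0"
  by auto

definition sh :: "(mono \<Rightarrow> 'a) \<Rightarrow> mono \<Rightarrow> 'a" where
  "sh f = (\<lambda>(a, b, m). f (a, b, Suc m))"

lemma sh_app[simp]: "sh f (a, b, m) = f (a, b, Suc m)" by (simp add: sh_def)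

lemma pairs_supp:
  assumes "supp_ok n A" "supp_ok n B" "(v, w) \<in> pairs (A, B)"
  shows "supp_ok n (fst v) \<and> supp_ok n (snd v) \<and> supp_ok n (fst w) \<and> supp_ok n (snd w)"
proof -
  from assms(3) have e: "\<And>i. A i = fst v i + fst w i" "\<And>i. B i = snd v i + snd w i"
    by (auto simp: pairs_def madd_def fun_eq_iff)
  show ?thesis using supp_ok_le[OF assms(1), of "fst v"] supp_ok_le[OF assms(1), of "fst w"]
      supp_ok_le[OF assms(2), of "snd v"] supp_ok_le[OF assms(2), of "snd w"] e by auto
qed

lemma pairs_nsupp:
  assumes "\<not> (supp_ok n A \<and> supp_ok n B)" "(v, w) \<in> pairs (A, B)"
  shows "\<not> (supp_ok n (fst v) \<and> supp_ok n (snd v) \<and> supp_ok n (fst w) \<and> supp_ok n (snd w))"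
proof
  assume s: "supp_ok n (fst v) \<and> supp_ok n (snd v) \<and> supp_ok n (fst w) \<and> supp_ok n (snd w)"
  from assms(2) have e: "A = (\<lambda>i. fst v i + fst w i)" "B = (\<lambda>i. snd v i + snd w i)"
    by (auto simp: pairs_def madd_def)
  have "supp_ok n A" "supp_ok n B" using s by (simp_all add: e supp_ok_add)
  with assms(1) show False by simp
qed

lemma cf_cl: "cf (cl n f) (a, b) = (if supp_ok n a \<and> supp_ok n b then f (a, b, 0) else 0)"
  by (auto simp: cl.rep_eq supp_ok_fs)

lemma cf_cl_mult:
  assumes "supp_ok n A" "supp_ok n B"
  shows "cf (cl n f * cl n g) (A, B) = (\<Sum>(v, w)\<in>pairs (A, B). f (fst v, snd v, 0) * g (fst w, snd w, 0))"
proof -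
  have "cf (cl n f * cl n g) (A, B) = (\<Sum>(v, w)\<in>pairs (A, B). cf (cl n f) v * cf (cl n g) w)"
    using assms by (simp add: cf_times supp_ok_fs)
  also have "\<dots> = (\<Sum>(v, w)\<in>pairs (A, B). f (fst v, snd v, 0) * g (fst w, snd w, 0))"
  proof (rule sum.cong[OF refl])
    fix p assume p: "p \<in> pairs (A, B)"
    obtain v w where pe: "p = (v, w)" by (cases p)
    show "(case p of (v, w) \<Rightarrow> cf (cl n f) v * cf (cl n g) w) =
          (case p of (v, w) \<Rightarrow> f (fst v, snd v, 0) * g (fst w, snd w, 0))"
      using pairs_supp[OF assms, of v w] p by (cases v, cases w) (simp add: pe cf_cl)
  qed
  finally show ?thesis .
qed

lemma cl_wmult: "cl n (wmult n f g) = cl n f * cl n g"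
proof (rule ps_eqI)
  fix u :: mi assume fu: "fs u"
  obtain A B where ue: "u = (A, B)" by (cases u)
  show "cf (cl n (wmult n f g)) u = cf (cl n f * cl n g) u"
  proof (cases "supp_ok n A \<and> supp_ok n B")
    case True
    then show ?thesis by (simp add: ue cf_cl cf_cl_mult wmult_0)
  next
    case False
    have "cf (cl n f * cl n g) (A, B) = (\<Sum>(v, w)\<in>pairs (A, B). cf (cl n f) v * cf (cl n g) w)"
      using fu by (simp add: ue cf_times)
    also have "\<dots> = 0"
    proof (rule sum.neutral, rule ballI)
      fix p assume p: "p \<in> pairs (A, B)"
      obtain v w where pe: "p = (v, w)" by (cases p)
      show "(case p of (v, w) \<Rightarrow> cf (cl n f) v * cf (cl n g) w) = 0"
        using pairs_nsupp[OF False, of v w] p by (cases v, cases w) (auto simp: pe cf_cl)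
    qed
    finally have "cf (cl n f * cl n g) u = 0" by (simp add: ue)
    moreover have "cf (cl n (wmult n f g)) u = 0" unfolding ue by (subst cf_cl) (use False in auto)
    ultimately show ?thesis by simp
  qed
qed

lemma wmult_comm0:
  assumes "supp_ok n A" "supp_ok n B"
  shows "wmult n f g (A, B, 0) = wmult n g f (A, B, 0)"
proof -
  have "cf (cl n (wmult n f g)) (A, B) = cf (cl n (wmult n g f)) (A, B)"
    by (simp add: cl_wmult mult.commute)
  then show ?thesis using assms by (simp add: cf_cl)
qed

lemma cf_dd_cl_mult:
  assumes sA: "supp_ok n A" and sB: "supp_ok n B" and i: "i < n"
  shows "cf (dd (i, True) (cl n f) * dd (i, False) (cl n g)) (A, B) =
    (\<Sum>(v, w)\<in>pairs (A, B). of_nat (snd v i + 1) * f (fst v, \<lambda>j. snd v j + unitv i j, 0) *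
        (of_nat (fst w i + 1) * g (\<lambda>j. fst w j + unitv i j, snd w, 0)))"
proof -
  have "cf (dd (i, True) (cl n f) * dd (i, False) (cl n g)) (A, B) =
     (\<Sum>(v, w)\<in>pairs (A, B). cf (dd (i, True) (cl n f)) v * cf (dd (i, False) (cl n g)) w)"
    using assms by (simp add: cf_times supp_ok_fs)
  also have "\<dots> = (\<Sum>(v, w)\<in>pairs (A, B). of_nat (snd v i + 1) * f (fst v, \<lambda>j. snd v j + unitv i j, 0) *
        (of_nat (fst w i + 1) * g (\<lambda>j. fst w j + unitv i j, snd w, 0)))"
  proof (rule sum.cong[OF refl])
    fix p assume p: "p \<in> pairs (A, B)"
    obtain v w where pe: "p = (v, w)" by (cases p)
    have s: "supp_ok n (fst v)" "supp_ok n (snd v)" "supp_ok n (fst w)" "supp_ok n (snd w)"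
      using pairs_supp[OF sA sB, of v w] p pe by auto
    have s2: "supp_ok n (\<lambda>j. snd v j + unitv i j)" "supp_ok n (\<lambda>j. fst w j + unitv i j)"
      using s supp_unitv[OF i] by (simp_all add: supp_ok_add)
    have m1: "madd v (eu (i, True)) = (fst v, \<lambda>j. snd v j + unitv i j)"
      by (simp add: madd_def eu_def)
    have m2: "madd w (eu (i, False)) = (\<lambda>j. fst w j + unitv i j, snd w)"
      by (simp add: madd_def eu_def)
    show "(case p of (v, w) \<Rightarrow> cf (dd (i, True) (cl n f)) v * cf (dd (i, False) (cl n g)) w) =
      (case p of (v, w) \<Rightarrow> of_nat (snd v i + 1) * f (fst v, \<lambda>j. snd v j + unitv i j, 0) *
        (of_nat (fst w i + 1) * g (\<lambda>j. fst w j + unitv i j, snd w, 0)))"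
      using s s2 by (simp add: pe dd.rep_eq m1 m2 cf_cl coord_def)
  qed
  finally show ?thesis .
qed

definition Wone :: "nat \<Rightarrow> (mono \<Rightarrow> 'a) \<Rightarrow> (mono \<Rightarrow> 'a) \<Rightarrow> 'a::comm_ring_1 ps" where
  "Wone n f g = cl n (sh f) * cl n g + cl n f * cl n (sh g) -
     (\<Sum>i<n. dd (i, True) (cl n f) * dd (i, False) (cl n g))"

lemma wmult_1_Wone:
  fixes f g :: "'a::field_char_0 ser"
  assumes sA: "supp_ok n A" and sB: "supp_ok n B"
  shows "wmult n f g (A, B, 1) = cf (Wone n f g) (A, B)"
proof -
  have t3: "(\<Sum>(v, w)\<in>pairs (A, B). - of_nat ((snd v i + 1) * (fst w i + 1)) *
        f (fst v, \<lambda>j. snd v j + unitv i j, 0) * g (\<lambda>j. fst w j + unitv i j, snd w, 0)) =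
     - cf (dd (i, True) (cl n f) * dd (i, False) (cl n g)) (A, B)" if i: "i < n" for i
    unfolding cf_dd_cl_mult[OF sA sB i] sum_negf[symmetric]
    by (rule sum.cong) (auto simp: algebra_simps)
  show ?thesis
    unfolding wmult_1[OF sA sB] Wone_def cf_minus cf_plus cf_sum
    using t3 by (simp add: cf_cl_mult[OF sA sB] sum_negf)
qed

lemma Wone_comm: "Wone n f g - Wone n g f = pb n (cl n f) (cl n g)"
proof -
  let ?F = "cl n f" and ?G = "cl n g"
  have "Wone n f g - Wone n g f =
     (\<Sum>i<n. dd (i, True) ?G * dd (i, False) ?F) - (\<Sum>i<n. dd (i, True) ?F * dd (i, False) ?G)"
    unfolding Wone_def by (simp add: algebra_simps)
  also have "\<dots> = pb n ?F ?G"
    unfolding pb_def sum_subtractf[symmetric] by (rule sum.cong) (simp_all add: mult.commute)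
  finally show ?thesis .
qed

lemma wmult_comm1:
  fixes f g :: "'a::field_char_0 ser"
  assumes "supp_ok n A" "supp_ok n B"
  shows "wmult n f g (A, B, 1) - wmult n g f (A, B, 1) = cf (pb n (cl n f) (cl n g)) (A, B)"
  using wmult_1_Wone[OF assms, of f g] wmult_1_Wone[OF assms, of g f] Wone_comm[of n f g]
  by (simp add: cf_minus[symmetric])


lemma sum_single:
  assumes "finite S" "\<And>t. t \<in> S \<Longrightarrow> t \<noteq> t0 \<Longrightarrow> g t = 0"
  shows "sum g S = (if t0 \<in> S then g t0 else 0)"
proof (cases "t0 \<in> S")
  case True
  have "sum g S = sum g {t0}"
    by (rule sum.mono_neutral_right) (use assms True in auto)
  then show ?thesis using True by simp
next
  case False
  then show ?thesis using assms by (intro trans[OF sum.neutral]) auto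
qed

lemma wmult_hbar:
  "wmult n hbar h (A, B, M) = (if supp_ok n A \<and> supp_ok n B \<and> M \<ge> 1 then h (A, B, M - 1) else 0)"
proof (cases "supp_ok n A \<and> supp_ok n B")
  case False
  then have "wmult n hbar h (A, B, M) = 0" by (rule wmult_nsupp)
  then show ?thesis using False by auto
next
  case True
  let ?t0 = "((\<lambda>_. 0), (\<lambda>_. 0), 1, A, B, M - 1, (\<lambda>_. 0)) ::
     (nat \<Rightarrow> nat) \<times> (nat \<Rightarrow> nat) \<times> nat \<times> (nat \<Rightarrow> nat) \<times> (nat \<Rightarrow> nat) \<times> nat \<times> (nat \<Rightarrow> nat)"
  let ?g = "\<lambda>(a, b, m, c, d, p, k). wcoeff n b c k * hbar (a, b, m) * h (c, d, p)"
  have z: "?g t = 0" if t: "t \<in> wterms n A B M" and nt: "t \<noteq> ?t0" for t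
  proof -
    obtain a b m c d p k where te: "t = (a, b, m, c, d, p, k)" by (cases t)
    show ?thesis
    proof (cases "(a, b, m) = ((\<lambda>_. 0), (\<lambda>_. 0), 1)")
      case False then show ?thesis by (auto simp: te hbar_def)
    next
      case ab: True
      from t have h: "supp_ok n k" "\<forall>i. k i \<le> b i \<and> k i \<le> c i \<and> A i = a i + c i - k i \<and> B i = b i + d i - k i"
        "M = m + p + (\<Sum>i<n. k i)" by (auto simp: te wterms_def)
      have k0: "k = (\<lambda>_. 0)" using h(2) ab by (auto simp: fun_eq_iff)
      have "c = A" "d = B" using h(2) ab k0 by (auto simp: fun_eq_iff)
      moreover have "p = M - 1" using h(3) ab k0 by simp
      ultimately have "t = ?t0" using ab k0 by (simp add: te)
      with nt show ?thesis by simp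
    qed
  qed
  have "wmult n hbar h (A, B, M) = (if ?t0 \<in> wterms n A B M then ?g ?t0 else 0)"
    unfolding wmult_eq by (rule sum_single[OF finite_wterms z])
  also have "\<dots> = (if M \<ge> 1 then h (A, B, M - 1) else 0)"
    using True by (auto simp: wterms_def supp_ok_def wcoeff_0 hbar_def)
  finally show ?thesis using True by simp
qed

lemma wmult_constc_left:
  assumes f: "f \<in> Dc n"
  shows "wmult n (constc c) f = (\<lambda>t. c * f t)"
proof
  fix t :: mono
  obtain A B M where te: "t = (A, B, M)" by (cases t)
  show "wmult n (constc c) f t = c * f t"
  proof (cases "supp_ok n A \<and> supp_ok n B")
    case False then show ?thesis using f by (simp add: te wmult_nsupp Dc_def)
  next
    case True
    let ?t0 = "((\<lambda>_. 0), (\<lambda>_. 0), 0, A, B, M, (\<lambda>_. 0)) ::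
       (nat \<Rightarrow> nat) \<times> (nat \<Rightarrow> nat) \<times> nat \<times> (nat \<Rightarrow> nat) \<times> (nat \<Rightarrow> nat) \<times> nat \<times> (nat \<Rightarrow> nat)"
    let ?g = "\<lambda>(a, b, m, c', d, p, k). wcoeff n b c' k * constc c (a, b, m) * f (c', d, p)"
    have z: "?g s = 0" if s: "s \<in> wterms n A B M" and ns: "s \<noteq> ?t0" for s
    proof -
      obtain a b m c' d p k where se: "s = (a, b, m, c', d, p, k)" by (cases s)
      show ?thesis
      proof (cases "(a, b, m) = ((\<lambda>_. 0), (\<lambda>_. 0), 0)")
        case False then show ?thesis by (auto simp: se constc_def)
      next
        case ab: True
        from s have h: "\<forall>i. k i \<le> b i \<and> k i \<le> c' i \<and> A i = a i + c' i - k i \<and> B i = b i + d i - k i"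
          "M = m + p + (\<Sum>i<n. k i)" by (auto simp: se wterms_def)
        have k0: "k = (\<lambda>_. 0)" using h(1) ab by (auto simp: fun_eq_iff)
        have "c' = A" "d = B" using h(1) ab k0 by (auto simp: fun_eq_iff)
        moreover have "p = M" using h(2) ab k0 by simp
        ultimately have "s = ?t0" using ab k0 by (simp add: se)
        with ns show ?thesis by simp
      qed
    qed
    have "wmult n (constc c) f (A, B, M) = (if ?t0 \<in> wterms n A B M then ?g ?t0 else 0)"
      unfolding wmult_eq by (rule sum_single[OF finite_wterms z])
    also have "\<dots> = c * f (A, B, M)"
      using True by (auto simp: wterms_def supp_ok_def wcoeff_0 constc_def)
    finally show ?thesis by (simp add: te)
  qed
qed

lemma wmult_constc_right:
  assumes f: "f \<in> Dc n"
  shows "wmult n f (constc c) = (\<lambda>t. f t * c)"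
proof
  fix t :: mono
  obtain A B M where te: "t = (A, B, M)" by (cases t)
  show "wmult n f (constc c) t = f t * c"
  proof (cases "supp_ok n A \<and> supp_ok n B")
    case False then show ?thesis using f by (simp add: te wmult_nsupp Dc_def)
  next
    case True
    let ?t0 = "(A, B, M, (\<lambda>_. 0), (\<lambda>_. 0), 0, (\<lambda>_. 0)) ::
       (nat \<Rightarrow> nat) \<times> (nat \<Rightarrow> nat) \<times> nat \<times> (nat \<Rightarrow> nat) \<times> (nat \<Rightarrow> nat) \<times> nat \<times> (nat \<Rightarrow> nat)"
    let ?g = "\<lambda>(a, b, m, c', d, p, k). wcoeff n b c' k * f (a, b, m) * constc c (c', d, p)"
    have z: "?g s = 0" if s: "s \<in> wterms n A B M" and ns: "s \<noteq> ?t0" for s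
    proof -
      obtain a b m c' d p k where se: "s = (a, b, m, c', d, p, k)" by (cases s)
      show ?thesis
      proof (cases "(c', d, p) = ((\<lambda>_. 0), (\<lambda>_. 0), 0)")
        case False then show ?thesis by (auto simp: se constc_def)
      next
        case cd: True
        from s have h: "\<forall>i. k i \<le> b i \<and> k i \<le> c' i \<and> A i = a i + c' i - k i \<and> B i = b i + d i - k i"
          "M = m + p + (\<Sum>i<n. k i)" by (auto simp: se wterms_def)
        have k0: "k = (\<lambda>_. 0)" using h(1) cd by (auto simp: fun_eq_iff)
        have "a = A" "b = B" using h(1) cd k0 by (auto simp: fun_eq_iff)
        moreover have "m = M" using h(2) cd k0 by simp
        ultimately have "s = ?t0" using cd k0 by (simp add: se)
        with ns show ?thesis by simp
      qed
    qed
    have "wmult n f (constc c) (A, B, M) = (if ?t0 \<in> wterms n A B M then ?g ?t0 else 0)"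
      unfolding wmult_eq by (rule sum_single[OF finite_wterms z])
    also have "\<dots> = f (A, B, M) * c"
      using True by (auto simp: wterms_def supp_ok_def wcoeff_0 constc_def)
    finally show ?thesis by (simp add: te)
  qed
qed

lemma wmult_add_left: "wmult n (\<lambda>t. f t + g t) h = (\<lambda>t. wmult n f h t + wmult n g h t)"
proof
  fix t :: mono
  obtain A B M where te: "t = (A, B, M)" by (cases t)
  show "wmult n (\<lambda>t. f t + g t) h t = wmult n f h t + wmult n g h t"
    unfolding te wmult_eq sum.distrib[symmetric] by (rule sum.cong) (auto simp: algebra_simps)
qed

lemma wmult_add_right: "wmult n h (\<lambda>t. f t + g t) = (\<lambda>t. wmult n h f t + wmult n h g t)"
proof
  fix t :: mono
  obtain A B M where te: "t = (A, B, M)" by (cases t)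
  show "wmult n h (\<lambda>t. f t + g t) t = wmult n h f t + wmult n h g t"
    unfolding te wmult_eq sum.distrib[symmetric] by (rule sum.cong) (auto simp: algebra_simps)
qed

lemma wmult_Dc: "wmult n f g \<in> Dc n"
  unfolding Dc_def
proof (intro CollectI allI impI)
  fix a b :: "nat \<Rightarrow> nat" and m :: nat assume "\<not> (supp_ok n a \<and> supp_ok n b)"
  then show "wmult n f g (a, b, m) = 0" by (rule wmult_nsupp)
qed

lemma Dc_add: "f \<in> Dc n \<Longrightarrow> g \<in> Dc n \<Longrightarrow> (\<lambda>t. f t + g t) \<in> Dc n"
  by (simp add: Dc_def)
lemma Dc_diff: "f \<in> Dc n \<Longrightarrow> g \<in> Dc n \<Longrightarrow> (\<lambda>t. f t - g t) \<in> Dc n"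
  by (simp add: Dc_def)
lemma Dc_constc: "constc c \<in> Dc n"
  by (auto simp: Dc_def constc_def supp_ok_def)
lemma Dc_vemb: "vemb n v \<in> Dc n"
  unfolding Dc_def
proof (intro CollectI allI impI)
  fix a b :: "nat \<Rightarrow> nat" and m :: nat assume ns: "\<not> (supp_ok n a \<and> supp_ok n b)"
  have z: "supp_ok n (\<lambda>_. 0)" by (simp add: supp_ok_def)
  have t0: "(if (a, b, m) = (unitv i, \<lambda>_. 0, 0) then v i else 0)
      + (if (a, b, m) = (\<lambda>_. 0, unitv i, 0) then v (n + i) else 0) = 0" if i: "i \<in> {..<n}" for i
  proof -
    have si: "supp_ok n (unitv i)" using i supp_unitv by simp
    have n1: "(a, b, m) \<noteq> (unitv i, \<lambda>_. 0, 0)"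
    proof
      assume "(a, b, m) = (unitv i, \<lambda>_. 0, 0)"
      then have "a = unitv i" "b = (\<lambda>_. 0)" by simp_all
      then show False using ns si z by simp
    qed
    have n2: "(a, b, m) \<noteq> (\<lambda>_. 0, unitv i, 0)"
    proof
      assume "(a, b, m) = (\<lambda>_. 0, unitv i, 0)"
      then have "b = unitv i" "a = (\<lambda>_. 0)" by simp_all
      then show False using ns si z by simp
    qed
    show ?thesis using n1 n2 by (simp only: if_False add_0)
  qed
  have "vemb n v (a, b, m) = (\<Sum>i<n. (if (a, b, m) = (unitv i, \<lambda>_. 0, 0) then v i else 0)
      + (if (a, b, m) = (\<lambda>_. 0, unitv i, 0) then v (n + i) else 0))"
    by (simp only: vemb_def)
  also have "\<dots> = 0" by (rule sum.neutral) (use t0 in blast)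
  finally show "vemb n v (a, b, m) = 0" .
qed

lemma Dc_sh: "f \<in> Dc n \<Longrightarrow> sh f \<in> Dc n"
  by (simp add: Dc_def)
lemma Dc_sum: "(\<And>i. i \<in> A \<Longrightarrow> F i \<in> Dc n) \<Longrightarrow> (\<lambda>t. \<Sum>i\<in>A. F i t) \<in> Dc n"
proof -
  assume h: "\<And>i. i \<in> A \<Longrightarrow> F i \<in> Dc n"
  show ?thesis unfolding Dc_def
  proof (intro CollectI allI impI)
    fix a b :: "nat \<Rightarrow> nat" and m :: nat assume ns: "\<not> (supp_ok n a \<and> supp_ok n b)"
    have "F i (a, b, m) = 0" if "i \<in> A" for i using h[OF that] ns by (simp add: Dc_def)
    then show "(\<Sum>i\<in>A. F i (a, b, m)) = 0" by simp
  qed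
qed

lemma cl_add: "cl n (\<lambda>t. f t + g t) = cl n f + cl n g"
  by (rule ps_eqI) (simp add: cl.rep_eq cf_plus)
lemma cl_diff: "cl n (\<lambda>t. f t - g t) = cl n f - cl n g"
  by (rule ps_eqI) (simp add: cl.rep_eq cf_minus)
lemma cf_cl_yes: "supp_ok n a \<Longrightarrow> supp_ok n b \<Longrightarrow> cf (cl n f) (a, b) = f (a, b, 0)"
  by (simp add: cf_cl)
lemma cf_cl_no: "\<not> (supp_ok n a \<and> supp_ok n b) \<Longrightarrow> cf (cl n f) (a, b) = 0"
  by (simp only: cf_cl if_False)

lemma cl_sum: "cl n (\<lambda>t. \<Sum>i\<in>A. F i t) = (\<Sum>i\<in>A. cl n (F i))"
proof (rule ps_eqI)
  fix u :: mi assume "fs u"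
  obtain a b where ue: "u = (a, b)" by (cases u)
  show "cf (cl n (\<lambda>t. \<Sum>i\<in>A. F i t)) u = cf (\<Sum>i\<in>A. cl n (F i)) u"
  proof (cases "supp_ok n a \<and> supp_ok n b")
    case True then show ?thesis by (simp add: ue cf_cl_yes cf_sum)
  next
    case False then show ?thesis by (simp add: ue cf_cl_no[OF False] cf_sum)
  qed
qed

lemma cl_hbar: "cl n (wmult n hbar h) = 0"
proof (rule ps_eqI)
  fix u :: mi assume "fs u"
  obtain a b where ue: "u = (a, b)" by (cases u)
  show "cf (cl n (wmult n hbar h)) u = cf 0 u"
    by (simp add: ue cf_cl cf_zero wmult_hbar)
qed

lemma supp_ok_zero: "supp_ok n (\<lambda>_. 0)" by (simp add: supp_ok_def)

lemma cl_constc: "cl n (constc c) = kc c"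
proof (rule ps_eqI)
  fix u :: mi assume "fs u"
  obtain a b where ue: "u = (a, b)" by (cases u)
  show "cf (cl n (constc c)) u = cf (kc c) u"
  proof (cases "u = mz")
    case True then show ?thesis by (simp add: ue cf_cl kc.rep_eq constc_def supp_ok_zero)
  next
    case False
    have "cf (kc c) u = 0" using False by (simp add: kc.rep_eq)
    moreover have "cf (cl n (constc c)) u = 0"
    proof (cases "supp_ok n a \<and> supp_ok n b")
      case True then show ?thesis using False by (auto simp: ue cf_cl_yes constc_def)
    next
      case c: False then show ?thesis by (simp add: ue cf_cl_no[OF c])
    qed
    ultimately show ?thesis by simp
  qed
qed

lemma cl_vemb: "cl n (vemb n v) = lin n v"
proof (rule ps_eqI)
  fix u :: mi assume fu: "fs u"
  obtain a b where ue: "u = (a, b)" by (cases u)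
  have "cf (lin n v) u = (\<Sum>i<n. v i * (if u = eu (i, False) then 1 else 0) +
            v (n + i) * (if u = eu (i, True) then 1 else 0))"
    unfolding lin_def by (simp add: cf_sum cf_plus cf_kc_mult Xm.rep_eq)
  also have "\<dots> = (\<Sum>i<n. (if (a, b, 0::nat) = (unitv i, \<lambda>_. 0, 0) then v i else 0)
                        + (if (a, b, 0::nat) = (\<lambda>_. 0, unitv i, 0) then v (n + i) else 0))"
  proof (rule sum.cong[OF refl])
    fix i assume "i \<in> {..<n}"
    have gen: "v i * (if P then 1 else 0) + v (n + i) * (if Q then 1 else 0) =
       (if P then v i else 0) + (if Q then v (n + i) else 0)" for P Q by simp
    have e1: "(u = eu (i, False)) = ((a, b, 0::nat) = (unitv i, \<lambda>_. 0, 0))"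
      by (simp add: ue eu_def)
    have e2: "(u = eu (i, True)) = ((a, b, 0::nat) = (\<lambda>_. 0, unitv i, 0))"
      by (simp add: ue eu_def)
    show "v i * (if u = eu (i, False) then 1 else 0) + v (n + i) * (if u = eu (i, True) then 1 else 0) =
      (if (a, b, 0::nat) = (unitv i, \<lambda>_. 0, 0) then v i else 0)
                        + (if (a, b, 0::nat) = (\<lambda>_. 0, unitv i, 0) then v (n + i) else 0)"
      unfolding e1 e2 by (rule gen)
  qed
  also have "\<dots> = vemb n v (a, b, 0)" by (simp only: vemb_def)
  also have "\<dots> = cf (cl n (vemb n v)) u"
  proof (cases "supp_ok n a \<and> supp_ok n b")
    case True then show ?thesis by (simp add: ue cf_cl_yes)
  next
    case False
    have "vemb n v (a, b, 0) = 0" using Dc_vemb[of n v] False by (simp add: Dc_def)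
    then show ?thesis by (simp add: ue cf_cl_no[OF False])
  qed
  finally show "cf (cl n (vemb n v)) u = cf (lin n v) u" by simp
qed

lemma I_mz: "P \<in> Iset n L \<Longrightarrow> cf P mz = 0"
proof (induction rule: Iset.induct)
  case I0 then show ?case by (simp add: cf_zero)
next
  case (Igen l q) then show ?case by (simp add: cf_lin_mult)
next
  case (Iadd P Q) then show ?case by (simp add: cf_plus)
qed


lemma okp_cl: "okp n (cl n f)"
  unfolding okp_def by (auto simp: cl.rep_eq split: if_splits)

lemma okp_add: "okp n P \<Longrightarrow> okp n Q \<Longrightarrow> okp n (P + Q)"
  unfolding okp_def by (metis add.right_neutral cf_plus)
lemma okp_diff: "okp n P \<Longrightarrow> okp n Q \<Longrightarrow> okp n (P - Q)"
  unfolding okp_def by (metis cf_minus diff_zero)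
lemma okp_zero: "okp n 0"
  unfolding okp_def by (simp add: cf_zero)
lemma okp_sum: "(\<And>i. i \<in> A \<Longrightarrow> okp n (F i)) \<Longrightarrow> okp n (\<Sum>i\<in>A. F i)"
proof (induction A rule: infinite_finite_induct)
  case (infinite A) then show ?case by (simp add: okp_zero)
next
  case empty then show ?case by (simp add: okp_zero)
next
  case (insert x F) then show ?case by (simp add: okp_add)
qed

lemma okp_mult:
  assumes P: "okp n P" and Q: "okp n Q"
  shows "okp n (P * Q)"
  unfolding okp_def
proof (intro allI impI)
  fix u assume nz: "cf (P * Q) u \<noteq> 0"
  have fu: "fs u" using nz cf_nfs by blast
  have "(\<Sum>(v, w)\<in>pairs u. cf P v * cf Q w) \<noteq> 0" using nz fu by (simp add: cf_times)
  then obtain p where p: "p \<in> pairs u" "(case p of (v, w) \<Rightarrow> cf P v * cf Q w) \<noteq> 0"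
    by (meson sum.not_neutral_contains_not_neutral)
  obtain v w where pe: "p = (v, w)" by (cases p)
  have "cf P v \<noteq> 0" "cf Q w \<noteq> 0" using p(2) by (auto simp: pe)
  then have s: "supp_ok n (fst v)" "supp_ok n (snd v)" "supp_ok n (fst w)" "supp_ok n (snd w)"
    using P Q unfolding okp_def by blast+
  have ue: "u = (\<lambda>i. fst v i + fst w i, \<lambda>i. snd v i + snd w i)"
    using p(1) by (auto simp: pe pairs_def madd_def)
  show "supp_ok n (fst u) \<and> supp_ok n (snd u)" using s by (simp add: ue supp_ok_add)
qed

lemma okp_dd:
  assumes i: "i < n" and P: "okp n P"
  shows "okp n (dd (i, b) P)"
  unfolding okp_def
proof (intro allI impI)
  fix u assume nz: "cf (dd (i, b) P) u \<noteq> 0"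
  then have "cf P (madd u (eu (i, b))) \<noteq> 0" by (auto simp: dd.rep_eq)
  then have s: "supp_ok n (fst (madd u (eu (i, b))))" "supp_ok n (snd (madd u (eu (i, b))))"
    using P unfolding okp_def by blast+
  show "supp_ok n (fst u) \<and> supp_ok n (snd u)"
    using supp_ok_le[OF s(1), of "fst u"] supp_ok_le[OF s(2), of "snd u"] by (simp add: madd_def)
qed

lemma okp_pb: "okp n P \<Longrightarrow> okp n Q \<Longrightarrow> okp n (pb n P Q)"
  unfolding pb_def by (intro okp_sum okp_diff okp_mult okp_dd) auto

lemma sum_lessThan_split: fixes a b :: nat shows "(\<Sum>i<a + b. f i) = (\<Sum>i<a. f i) + (\<Sum>i<b. f (a + i))"
proof (induction b)
  case 0 then show ?case by simp
next
  case (Suc b) then show ?case by (simp add: add.assoc)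
qed

lemma I_list:
  "P \<in> Iset n L \<Longrightarrow> \<exists>ls qs. length qs = length ls \<and> set ls \<subseteq> L \<and>
      P = (\<Sum>i<length ls. lin n (ls ! i) * qs ! i)"
proof (induction rule: Iset.induct)
  case I0 then show ?case by (intro exI[of _ "[]"]) simp
next
  case (Igen l q) then show ?case by (intro exI[of _ "[l]"] exI[of _ "[q]"]) simp
next
  case (Iadd P Q)
  from Iadd.IH obtain ls1 qs1 ls2 qs2 where
    h1: "length qs1 = length ls1" "set ls1 \<subseteq> L" "P = (\<Sum>i<length ls1. lin n (ls1 ! i) * qs1 ! i)" and
    h2: "length qs2 = length ls2" "set ls2 \<subseteq> L" "Q = (\<Sum>i<length ls2. lin n (ls2 ! i) * qs2 ! i)"
    by blast
  have "(\<Sum>i<length (ls1 @ ls2). lin n ((ls1 @ ls2) ! i) * (qs1 @ qs2) ! i) = P + Q"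
    unfolding length_append sum_lessThan_split h1(3) h2(3)
    using h1(1) h2(1) by (intro arg_cong2[where f="(+)"] sum.cong) (auto simp: nth_append)
  then show ?case using h1 h2 by (intro exI[of _ "ls1 @ ls2"] exI[of _ "qs1 @ qs2"]) auto
qed

definition lift :: "nat \<Rightarrow> 'a::comm_ring_1 ps \<Rightarrow> mono \<Rightarrow> 'a" where
  "lift n q = (\<lambda>(a, b, m). if m = 0 \<and> supp_ok n a \<and> supp_ok n b then cf q (a, b) else 0)"

lemma lift_Dc: "lift n q \<in> Dc n"
  by (auto simp: Dc_def lift_def)

lemma mdec_supp:
  assumes "supp_ok n (fst u)" "supp_ok n (snd u)"
  shows "supp_ok n (fst (mdec k u)) \<and> supp_ok n (snd (mdec k u))"
  using assms supp_ok_le[OF assms(1), of "\<lambda>j. fst u j - unitv (fst k) j"]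
    supp_ok_le[OF assms(2), of "\<lambda>j. snd u j - unitv (fst k) j"]
  by (auto simp: mdec_def)

lemma lin_lift:
  assumes s: "supp_ok n A" "supp_ok n B"
  shows "cf (lin n l * cl n (lift n q)) (A, B) = cf (lin n l * q) (A, B)"
proof -
  have e: "cf (cl n (lift n q)) (mdec k (A, B)) = cf q (mdec k (A, B))" for k
  proof -
    obtain x y where xy: "mdec k (A, B) = (x, y)" by (cases "mdec k (A, B)")
    have "supp_ok n x" "supp_ok n y" using mdec_supp[of n "(A, B)" k] s by (simp_all add: xy)
    then show ?thesis by (simp add: xy cf_cl_yes lift_def)
  qed
  show ?thesis unfolding cf_lin_mult e ..
qed

lemma J_char:
  fixes L :: "(nat \<Rightarrow> 'a::field_char_0) set"
  shows "j \<in> Jideal n L \<longleftrightarrow> j \<in> Dc n \<and> cl n j \<in> Iset n L"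
proof
  assume j: "j \<in> Jideal n L"
  then obtain ls gs h where h: "length gs = length ls" "set ls \<subseteq> L" "set gs \<subseteq> Dc n" "h \<in> Dc n"
    "j = (\<lambda>t. (\<Sum>i<length ls. wmult n (vemb n (ls ! i)) (gs ! i) t) + wmult n hbar h t)"
    and jD: "j \<in> Dc n" unfolding Jideal_def by blast
  have "cl n j = (\<Sum>i<length ls. lin n (ls ! i) * cl n (gs ! i))"
    unfolding h(5) cl_add cl_sum cl_hbar by (simp add: cl_wmult cl_vemb)
  also have "\<dots> \<in> Iset n L"
    using h(2) by (intro I_sum Iset.Igen) auto
  finally show "j \<in> Dc n \<and> cl n j \<in> Iset n L" using jD by simp
next
  assume a: "j \<in> Dc n \<and> cl n j \<in> Iset n L"
  then have jD: "j \<in> Dc n" and jI: "cl n j \<in> Iset n L" by auto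
  obtain ls qs where q: "length qs = length ls" "set ls \<subseteq> L"
    "cl n j = (\<Sum>i<length ls. lin n (ls ! i) * qs ! i)"
    using I_list[OF jI] by blast
  define gs where "gs = map (lift n) qs"
  define S where "S = (\<lambda>t. \<Sum>i<length ls. wmult n (vemb n (ls ! i)) (gs ! i) t)"
  define R where "R = (\<lambda>t. j t - S t)"
  have gsn: "gs ! i = lift n (qs ! i)" if "i < length ls" for i using that q(1) by (simp add: gs_def)
  have SD: "S \<in> Dc n" unfolding S_def by (intro Dc_sum wmult_Dc)
  have RD: "R \<in> Dc n" unfolding R_def using jD SD by (rule Dc_diff)
  have R0: "R (a, b, 0) = 0" for a b
  proof (cases "supp_ok n a \<and> supp_ok n b")
    case False
    then have "j (a, b, 0) = 0" "S (a, b, 0) = 0" using jD SD by (auto simp: Dc_def)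
    then show ?thesis by (simp add: R_def)
  next
    case True
    have "j (a, b, 0) = cf (cl n j) (a, b)" using True by (simp add: cf_cl_yes)
    also have "\<dots> = (\<Sum>i<length ls. cf (lin n (ls ! i) * qs ! i) (a, b))" by (simp add: q(3) cf_sum)
    also have "\<dots> = (\<Sum>i<length ls. cf (lin n (ls ! i) * cl n (gs ! i)) (a, b))"
      using True by (intro sum.cong) (simp_all add: gsn lin_lift)
    also have "\<dots> = cf (cl n S) (a, b)"
      by (simp add: S_def cl_sum cf_sum cl_wmult cl_vemb)
    also have "\<dots> = S (a, b, 0)" using True by (simp add: cf_cl_yes)
    finally show ?thesis by (simp add: R_def)
  qed
  have jeq: "j = (\<lambda>t. S t + wmult n hbar (sh R) t)"
  proof
    fix t :: mono
    obtain A B M where te: "t = (A, B, M)" by (cases t)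
    show "j t = S t + wmult n hbar (sh R) t"
    proof (cases "supp_ok n A \<and> supp_ok n B")
      case False
      then have "j t = 0" "S t = 0" using jD SD by (auto simp: Dc_def te)
      moreover have "wmult n hbar (sh R) t = 0" using False by (simp add: te wmult_nsupp)
      ultimately show ?thesis by simp
    next
      case True
      show ?thesis
      proof (cases M)
        case 0
        then show ?thesis using True R0[of A B] by (simp add: te wmult_hbar R_def)
      next
        case (Suc M')
        then show ?thesis using True by (simp add: te wmult_hbar R_def)
      qed
    qed
  qed
  show "j \<in> Jideal n L"
    unfolding Jideal_def
  proof (intro CollectI conjI exI)
    show "j \<in> Dc n" by (rule jD)
    show "length gs = length ls" using q(1) by (simp add: gs_def)
    show "set ls \<subseteq> L" by (rule q(2))
    show "set gs \<subseteq> Dc n" by (auto simp: gs_def lift_Dc)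
    show "sh R \<in> Dc n" using RD by (rule Dc_sh)
    show "j = (\<lambda>t. (\<Sum>i<length ls. wmult n (vemb n (ls ! i)) (gs ! i) t) + wmult n hbar (sh R) t)"
      using jeq by (simp add: S_def)
  qed
qed


lemma iso_L:
  assumes lag: "lagrangian n L" and "l \<in> L" "l' \<in> L"
  shows "omega n l l' = 0"
  using memL[OF lag, of l'] assms by blast

lemma comm_in_J:
  fixes L :: "(nat \<Rightarrow> 'a::field_char_0) set"
  assumes lag: "lagrangian n L" and j: "j \<in> Jideal n L" and b: "b \<in> Jideal n L"
  shows "\<exists>c\<in>Jideal n L. wmult n hbar c = (\<lambda>t. wmult n j b t - wmult n b j t)"
proof -
  define C where "C = (\<lambda>t. wmult n j b t - wmult n b j t)"
  have CD: "C \<in> Dc n" unfolding C_def by (intro Dc_diff wmult_Dc)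
  have jI: "cl n j \<in> Iset n L" and bI: "cl n b \<in> Iset n L" using j b by (auto simp: J_char)
  have clc: "cl n (sh C) = pb n (cl n j) (cl n b)"
  proof (rule ps_eqI)
    fix u :: mi assume "fs u"
    obtain A B where ue: "u = (A, B)" by (cases u)
    show "cf (cl n (sh C)) u = cf (pb n (cl n j) (cl n b)) u"
    proof (cases "supp_ok n A \<and> supp_ok n B")
      case True
      then have "cf (cl n (sh C)) u = C (A, B, 1)" by (simp add: ue cf_cl_yes)
      also have "\<dots> = cf (pb n (cl n j) (cl n b)) u"
        using wmult_comm1[of n A B j b] True by (simp add: C_def ue)
      finally show ?thesis .
    next
      case False
      have "okp n (pb n (cl n j) (cl n b))" by (intro okp_pb okp_cl)
      then have "cf (pb n (cl n j) (cl n b)) u = 0" using False unfolding okp_def ue by auto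
      then show ?thesis by (simp add: ue cf_cl_no[OF False])
    qed
  qed
  have "sh C \<in> Jideal n L"
    unfolding J_char clc
    using Dc_sh[OF CD] pb_I[OF iso_L[OF lag] bI jI] by blast
  moreover have "wmult n hbar (sh C) = C"
  proof
    fix t :: mono
    obtain A B M where te: "t = (A, B, M)" by (cases t)
    show "wmult n hbar (sh C) t = C t"
    proof (cases "supp_ok n A \<and> supp_ok n B")
      case False
      then have "C t = 0" using CD by (auto simp: Dc_def te)
      then show ?thesis using False by (simp add: te wmult_nsupp)
    next
      case True
      show ?thesis
      proof (cases M)
        case 0
        then show ?thesis using True wmult_comm0[of n A B j b] by (simp add: te wmult_hbar C_def)
      next
        case (Suc M')
        then show ?thesis using True by (simp add: te wmult_hbar)
      qed
    qed
  qed
  ultimately show ?thesis unfolding C_def by blast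
qed

lemma gcls_mem: "x \<in> gcls n a \<longleftrightarrow> (\<exists>c. x = (\<lambda>t. a t + constc c t))"
  by (auto simp: gcls_def)

lemma constc_add: "constc c t + constc c' t = constc (c + c') t"
  by (simp add: constc_def)

lemma gcls_shift: "gcls n (\<lambda>t. a t + constc c t) = gcls n a"
proof (intro equalityI subsetI)
  fix x assume "x \<in> gcls n (\<lambda>t. a t + constc c t)"
  then obtain c' where "x = (\<lambda>t. a t + constc c t + constc c' t)" by (auto simp: gcls_mem)
  then have "x = (\<lambda>t. a t + constc (c + c') t)" by (simp add: add.assoc constc_add)
  then show "x \<in> gcls n a" by (auto simp: gcls_mem)
next
  fix x assume "x \<in> gcls n a"
  then obtain c' where x: "x = (\<lambda>t. a t + constc c' t)" by (auto simp: gcls_mem)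
  have "x = (\<lambda>t. a t + constc c t + constc (c' - c) t)" by (simp add: x add.assoc constc_add)
  then show "x \<in> gcls n (\<lambda>t. a t + constc c t)" by (auto simp: gcls_mem)
qed

lemma self_gcls: "a \<in> gcls n a"
  unfolding gcls_mem by (intro exI[of _ 0]) (simp add: constc_def)

lemma normalize_rev:
  fixes L :: "(nat \<Rightarrow> 'a::field_char_0) set"
  assumes lag: "lagrangian n L" and aD: "a \<in> Dc n" and nm: "normalizes n (Jideal n L) a"
  shows "\<exists>a'\<in>Jideal n L. gcls n a = gcls n a'"
proof -
  have hyp: "pb n (cl n a) (lin n l) \<in> Iset n L" if l: "l \<in> L" for l
  proof -
    have vJ: "vemb n l \<in> Jideal n L"
      unfolding J_char cl_vemb using Dc_vemb Iset.Igen[OF l, of n 1] by simp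
    obtain c where cJ: "c \<in> Jideal n L"
      and ce: "wmult n hbar c = (\<lambda>t. wmult n a (vemb n l) t - wmult n (vemb n l) a t)"
      using nm vJ unfolding normalizes_def by blast
    have cD: "c \<in> Dc n" and cI: "cl n c \<in> Iset n L" using cJ by (auto simp: J_char)
    have "cl n c = pb n (cl n a) (lin n l)"
    proof (rule ps_eqI)
      fix u :: mi assume "fs u"
      obtain A B where ue: "u = (A, B)" by (cases u)
      show "cf (cl n c) u = cf (pb n (cl n a) (lin n l)) u"
      proof (cases "supp_ok n A \<and> supp_ok n B")
        case True
        have "cf (cl n c) u = c (A, B, 0)" using True by (simp add: ue cf_cl_yes)
        also have "\<dots> = wmult n hbar c (A, B, 1)" using True by (simp add: wmult_hbar)
        also have "\<dots> = cf (pb n (cl n a) (cl n (vemb n l))) u"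
          using wmult_comm1[of n A B a "vemb n l"] True by (simp add: ce ue)
        finally show ?thesis by (simp add: cl_vemb)
      next
        case False
        have "okp n (pb n (cl n a) (cl n (vemb n l)))" by (intro okp_pb okp_cl)
        then have "cf (pb n (cl n a) (lin n l)) u = 0"
          using False unfolding okp_def ue cl_vemb by auto
        then show ?thesis by (simp add: ue cf_cl_no[OF False])
      qed
    qed
    then show ?thesis using cI by simp
  qed
  have key: "cl n a - kc (cf (cl n a) mz) \<in> Iset n L"
    by (rule rev_key[OF lag okp_cl hyp])
  define a' where "a' = (\<lambda>t. a t + constc (- a (\<lambda>_. 0, \<lambda>_. 0, 0)) t)"
  have a'D: "a' \<in> Dc n" unfolding a'_def by (intro Dc_add aD Dc_constc)
  have "cl n a' = cl n a - kc (cf (cl n a) mz)"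
    unfolding a'_def cl_add cl_constc
    by (simp add: cf_cl_yes supp_ok_zero kc_uminus)
  then have "a' \<in> Jideal n L" using a'D key by (simp add: J_char)
  moreover have "gcls n a = gcls n a'" unfolding a'_def by (simp add: gcls_shift)
  ultimately show ?thesis by blast
qed

theorem lemma3p1:
  fixes n :: nat and L :: "(nat \<Rightarrow> 'k::field_char_0) set"
  assumes "lagrangian n L"
  shows "inj_on (gcls n) (Jideal n L) \<and> gcls n ` Jideal n L = GJ n L"
proof (intro conjI)
  note lag = assms
  have j0: "j (\<lambda>_. 0, \<lambda>_. 0, 0) = 0" if "j \<in> Jideal n L" for j
  proof -
    have "cl n j \<in> Iset n L" using that by (simp add: J_char)
    then have "cf (cl n j) mz = 0" by (rule I_mz)
    then show ?thesis by (simp add: cf_cl_yes supp_ok_zero)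
  qed
  show "inj_on (gcls n) (Jideal n L)"
  proof (rule inj_onI)
    fix j1 j2 assume j1: "j1 \<in> Jideal n L" and j2: "j2 \<in> Jideal n L" and e: "gcls n j1 = gcls n j2"
    have "j1 \<in> gcls n j2" using self_gcls[of j1 n] e by simp
    then obtain c where c: "j1 = (\<lambda>t. j2 t + constc c t)" by (auto simp: gcls_mem)
    have "j1 (\<lambda>_. 0, \<lambda>_. 0, 0) = j2 (\<lambda>_. 0, \<lambda>_. 0, 0) + c"
      by (simp add: c constc_def)
    then have "c = 0" using j0[OF j1] j0[OF j2] by simp
    then show "j1 = j2" using c by (simp add: constc_def)
  qed
  show "gcls n ` Jideal n L = GJ n L"
  proof (intro equalityI subsetI)
    fix X assume "X \<in> gcls n ` Jideal n L"
    then obtain j where jJ: "j \<in> Jideal n L" and X: "X = gcls n j" by blast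
    have jD: "j \<in> Dc n" using jJ by (simp add: J_char)
    have "normalizes n (Jideal n L) a" if "a \<in> X" for a
    proof -
      have "a \<in> gcls n j" using that X by simp
      then obtain c where a: "a = (\<lambda>t. j t + constc c t)" unfolding gcls_mem by blast
      show ?thesis
        unfolding normalizes_def
      proof
        fix b assume bJ: "b \<in> Jideal n L"
        have bD: "b \<in> Dc n" using bJ by (simp add: J_char)
        have "(\<lambda>t. wmult n a b t - wmult n b a t) = (\<lambda>t. wmult n j b t - wmult n b j t)"
          unfolding a wmult_add_left wmult_add_right wmult_constc_left[OF bD] wmult_constc_right[OF bD]
          by (simp add: mult.commute)
        then show "\<exists>c\<in>Jideal n L. wmult n hbar c = (\<lambda>t. wmult n a b t - wmult n b a t)"
          using comm_in_J[OF lag jJ bJ] by simp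
      qed
    qed
    moreover have "X \<in> Gset n" using jD by (simp add: X Gset_def)
    ultimately show "X \<in> GJ n L" by (simp add: GJ_def)
  next
    fix X assume "X \<in> GJ n L"
    then have XG: "X \<in> Gset n" and nm: "\<forall>a\<in>X. normalizes n (Jideal n L) a" by (auto simp: GJ_def)
    then obtain a where aD: "a \<in> Dc n" and X: "X = gcls n a" by (auto simp: Gset_def)
    have "normalizes n (Jideal n L) a" using nm self_gcls[of a n] by (simp add: X)
    then obtain a' where "a' \<in> Jideal n L" "gcls n a = gcls n a'"
      using normalize_rev[OF lag aD] by blast
    then show "X \<in> gcls n ` Jideal n L" by (simp add: X)
  qed
qed


end
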